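(* Let $V$ be an $n$-dimensional complex vector space with basis $e_1,\ldots,e_n$ and dual basis $e_1^*,\ldots,e_n^*$. Let $a_{ij}=e_i\otimes e_j-e_j\otimes e_i\in\Lambda_2(V)$, $b_{ij}=e_i^*\otimes e_j^*+e_j^*\otimes e_i^*\in S_2(V^* )$, $A=(a_{ij})$, $B=(b_{ij})\in\operatorname{Mat}_{n,n}(\Lambda(\Lambda_2(V)\oplus S_2(V^* )))$, let $v={}^t(v_1,\ldots,v_n)$, $w={}^t(w_1,\ldots,w_n)$ with $v_i,w_i\in\mathbb{C}$ arbitrary, and put $$Q=\sum_{\sigma\in S_{n+1}}\sum_{1\le i_1,\ldots,i_{n+1}\le n}\operatorname{sgn}(\sigma)(AB)_{i_1i_{\sigma(1)}}\cdots(AB)_{i_{n-1}i_{\sigma(n-1)}}A_{i_ni_{n+1}}w_{i_{\sigma(n)}}v_{i_{\sigma(n+1)}}.$$ Then $Q=(-1)^{n-1}\,2\,(n-1)!\,{}^tw\,A(BA)^{n-1}v$.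
   Context: $\Lambda(\Lambda_2(V)\oplus S_2(V^* ))$ is the exterior algebra on $\Lambda_2(V)\oplus S_2(V^* )$; the $a_{ij}$, $b_{ij}$ are of degree one (pairwise anticommuting), $a_{ji}=-a_{ij}$, $b_{ji}=b_{ij}$. All products of entries are taken in the order written. *)

theory Defs
  imports Complex_Main "HOL-Combinatorics.Permutations" "HOL-Library.Product_Lexorder"
begin

text \<open>Exterior algebra over the complex numbers on the generators
  a_ij (i < j), tagged True, and b_ij (i \<le> j), tagged False.
  An element is a coefficient function on finite sets of generators
  (the basis monomial of a finite set S is the product of its elements in
  increasing order). Values at infinite sets are irrelevant (always 0 for
  everything built below).\<close>

type_synonym gen = "bool \<times> nat \<times> nat"
type_synonym ext = "gen set \<Rightarrow> complex"

definition inv_sign :: "gen set \<Rightarrow> gen set \<Rightarrow> complex" where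
  "inv_sign S T = (-1) ^ card {(s, t). s \<in> S \<and> t \<in> T \<and> t < s}"

definition ext_mul :: "ext \<Rightarrow> ext \<Rightarrow> ext" (infixl "\<odot>" 70) where
  "ext_mul x y = (\<lambda>U. if finite U
      then (\<Sum>S\<in>Pow U. inv_sign S (U - S) * x S * y (U - S)) else 0)"

definition ext_add :: "ext \<Rightarrow> ext \<Rightarrow> ext" where
  "ext_add x y = (\<lambda>U. x U + y U)"

definition ext_scale :: "complex \<Rightarrow> ext \<Rightarrow> ext" where
  "ext_scale c x = (\<lambda>U. c * x U)"

definition ext_zero :: ext where
  "ext_zero = (\<lambda>U. 0)"

definition ext_one :: ext where
  "ext_one = (\<lambda>U. if U = {} then 1 else 0)"

definition ext_gen :: "gen \<Rightarrow> ext" where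
  "ext_gen g = (\<lambda>U. if U = {g} then 1 else 0)"

definition ext_sum :: "('i \<Rightarrow> ext) \<Rightarrow> 'i set \<Rightarrow> ext" where
  "ext_sum f I = (\<lambda>U. \<Sum>i\<in>I. f i U)"

definition ext_prod_list :: "ext list \<Rightarrow> ext" where
  "ext_prod_list xs = foldr ext_mul xs ext_one"

definition gen_a :: "nat \<Rightarrow> nat \<Rightarrow> ext" where
  "gen_a i j = (if i < j then ext_gen (True, i, j)
     else if j < i then ext_scale (-1) (ext_gen (True, j, i)) else ext_zero)"

definition gen_b :: "nat \<Rightarrow> nat \<Rightarrow> ext" where
  "gen_b i j = ext_gen (False, min i j, max i j)"

type_synonym emat = "nat \<Rightarrow> nat \<Rightarrow> ext"

definition mat_mul :: "nat \<Rightarrow> emat \<Rightarrow> emat \<Rightarrow> emat" where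
  "mat_mul n M N = (\<lambda>i j. ext_sum (\<lambda>k. M i k \<odot> N k j) {1..n})"

definition mat_id :: emat where
  "mat_id = (\<lambda>i j. if i = j then ext_one else ext_zero)"

fun mat_pow :: "nat \<Rightarrow> emat \<Rightarrow> nat \<Rightarrow> emat" where
  "mat_pow n M 0 = mat_id"
| "mat_pow n M (Suc k) = mat_mul n (mat_pow n M k) M"

definition bil :: "nat \<Rightarrow> (nat \<Rightarrow> complex) \<Rightarrow> emat \<Rightarrow> (nat \<Rightarrow> complex) \<Rightarrow> ext" where
  "bil n w M v = ext_sum (\<lambda>(i, j). ext_scale (w i * v j) (M i j)) ({1..n} \<times> {1..n})"

definition Qsum :: "nat \<Rightarrow> (nat \<Rightarrow> complex) \<Rightarrow> (nat \<Rightarrow> complex) \<Rightarrow> ext" where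
  "Qsum n v w =
     ext_sum (\<lambda>\<sigma>. ext_sum (\<lambda>ii.
        ext_scale (of_int (sign \<sigma>) * w (ii (\<sigma> n)) * v (ii (\<sigma> (n + 1))))
          (ext_prod_list (map (\<lambda>k. mat_mul n gen_a gen_b (ii k) (ii (\<sigma> k))) [1..<n])
           \<odot> gen_a (ii n) (ii (n + 1))))
       (PiE {1..n+1} (\<lambda>_. {1..n})))
     {\<sigma>. \<sigma> permutes {1..n+1}}"

end

theory Submission
  imports Defs
begin

definition fin :: "ext \<Rightarrow> bool" where "fin x \<longleftrightarrow> (\<forall>U. infinite U \<longrightarrow> x U = 0)"

lemma inv_sign_empty1[simp]: "inv_sign {} T = 1"
  by (simp add: inv_sign_def)
lemma inv_sign_empty2[simp]: "inv_sign S {} = 1"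
  by (simp add: inv_sign_def)

lemma inv_sign_Un1:
  assumes "finite S" "finite S'" "finite T" "S \<inter> S' = {}"
  shows "inv_sign (S \<union> S') T = inv_sign S T * inv_sign S' T"
proof -
  let ?X = "{(s, t). s \<in> S \<and> t \<in> T \<and> t < s}"
  let ?Y = "{(s, t). s \<in> S' \<and> t \<in> T \<and> t < s}"
  have e: "{(s, t). s \<in> S \<union> S' \<and> t \<in> T \<and> t < s} = ?X \<union> ?Y" by auto
  have fX: "finite ?X" by (rule finite_subset[of _ "S \<times> T"]) (use assms in auto)
  have fY: "finite ?Y" by (rule finite_subset[of _ "S' \<times> T"]) (use assms in auto)
  have d: "?X \<inter> ?Y = {}" using assms(4) by auto
  show ?thesis unfolding inv_sign_def e card_Un_disjoint[OF fX fY d] power_add by simp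
qed

lemma inv_sign_Un2:
  assumes "finite S" "finite T" "finite T'" "T \<inter> T' = {}"
  shows "inv_sign S (T \<union> T') = inv_sign S T * inv_sign S T'"
proof -
  let ?X = "{(s, t). s \<in> S \<and> t \<in> T \<and> t < s}"
  let ?Y = "{(s, t). s \<in> S \<and> t \<in> T' \<and> t < s}"
  have e: "{(s, t). s \<in> S \<and> t \<in> T \<union> T' \<and> t < s} = ?X \<union> ?Y" by auto
  have fX: "finite ?X" by (rule finite_subset[of _ "S \<times> T"]) (use assms in auto)
  have fY: "finite ?Y" by (rule finite_subset[of _ "S \<times> T'"]) (use assms in auto)
  have d: "?X \<inter> ?Y = {}" using assms(4) by auto
  show ?thesis unfolding inv_sign_def e card_Un_disjoint[OF fX fY d] power_add by simp
qed

lemma inv_sign_swap: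
  assumes "finite S" "finite T" "S \<inter> T = {}"
  shows "inv_sign S T * inv_sign T S = (-1) ^ (card S * card T)"
proof -
  let ?X = "{(s, t). s \<in> S \<and> t \<in> T \<and> t < s}"
  let ?Y = "{(t, s). t \<in> T \<and> s \<in> S \<and> s < t}"
  let ?Y' = "{(s, t). s \<in> S \<and> t \<in> T \<and> s < t}"
  have fX: "finite ?X" by (rule finite_subset[of _ "S \<times> T"]) (use assms in auto)
  have fY': "finite ?Y'" by (rule finite_subset[of _ "S \<times> T"]) (use assms in auto)
  have "?Y = (\<lambda>(s,t). (t,s)) ` ?Y'" by auto
  moreover have "inj_on (\<lambda>(s,t). (t,s)) ?Y'" by (auto simp: inj_on_def)
  ultimately have cY: "card ?Y = card ?Y'" by (simp add: card_image)
  have u: "?X \<union> ?Y' = S \<times> T"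
  proof
    show "S \<times> T \<subseteq> ?X \<union> ?Y'"
    proof
      fix p assume "p \<in> S \<times> T"
      then obtain s t where p: "p = (s,t)" "s \<in> S" "t \<in> T" by auto
      then have "s \<noteq> t" using assms(3) by auto
      then have "t < s \<or> s < t" by auto
      then show "p \<in> ?X \<union> ?Y'" using p by auto
    qed
  qed auto
  have d: "?X \<inter> ?Y' = {}" by auto
  have "card ?X + card ?Y' = card (S \<times> T)"
    using card_Un_disjoint[OF fX fY' d] u by simp
  then have c: "card ?X + card ?Y = card S * card T"
    by (simp only: cY card_cartesian_product)
  have "inv_sign S T * inv_sign T S = (-1) ^ (card ?X + card ?Y)"
    unfolding inv_sign_def power_add by simp
  then show ?thesis using c by simp
qed

lemma ext_mul_fin: "fin (x \<odot> y)"
  by (simp add: fin_def ext_mul_def)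

lemma ext_mul_finite: "finite U \<Longrightarrow> (x \<odot> y) U = (\<Sum>S\<in>Pow U. inv_sign S (U - S) * x S * y (U - S))"
  by (simp add: ext_mul_def)

lemma ext_mul_assoc: "(x \<odot> y) \<odot> z = x \<odot> (y \<odot> z)"
proof
  fix U
  show "((x \<odot> y) \<odot> z) U = (x \<odot> (y \<odot> z)) U"
  proof (cases "finite U")
    case False then show ?thesis by (simp add: ext_mul_def)
  next
    case fU: True
    define F where "F R S = inv_sign S (U - S) * inv_sign R (S - R) * x R * y (S - R) * z (U - S)" for R S
    have "((x \<odot> y) \<odot> z) U = (\<Sum>S\<in>Pow U. \<Sum>R\<in>Pow S. F R S)"
      unfolding ext_mul_finite[OF fU] F_def
    proof (rule sum.cong[OF refl])
      fix S assume "S \<in> Pow U"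
      then have fS: "finite S" using fU finite_subset by auto
      show "inv_sign S (U - S) * (x \<odot> y) S * z (U - S) =
        (\<Sum>R\<in>Pow S. inv_sign S (U - S) * inv_sign R (S - R) * x R * y (S - R) * z (U - S))"
        unfolding ext_mul_finite[OF fS] sum_distrib_left sum_distrib_right
        by (simp add: algebra_simps)
    qed
    also have "\<dots> = (\<Sum>S\<in>Pow U. \<Sum>R\<in>{R\<in>Pow U. R \<subseteq> S}. F R S)"
      by (rule sum.cong[OF refl]) (rule sum.cong, auto)
    also have "\<dots> = (\<Sum>R\<in>Pow U. \<Sum>S\<in>{S\<in>Pow U. R \<subseteq> S}. F R S)"
      using sum.swap_restrict[of "Pow U" "Pow U" "\<lambda>S R. F R S" "\<lambda>S R. R \<subseteq> S"] fU by simp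
    also have "\<dots> = (\<Sum>R\<in>Pow U. \<Sum>S'\<in>Pow (U - R). F R (R \<union> S'))"
    proof (rule sum.cong[OF refl])
      fix R assume R: "R \<in> Pow U"
      have inj: "inj_on (\<lambda>S'. R \<union> S') (Pow (U - R))" by (auto simp: inj_on_def)
      have im: "(\<lambda>S'. R \<union> S') ` Pow (U - R) = {S\<in>Pow U. R \<subseteq> S}"
      proof
        show "{S\<in>Pow U. R \<subseteq> S} \<subseteq> (\<lambda>S'. R \<union> S') ` Pow (U - R)"
        proof
          fix S assume "S \<in> {S\<in>Pow U. R \<subseteq> S}"
          then have "S = R \<union> (S - R)" "S - R \<in> Pow (U - R)" by auto
          then show "S \<in> (\<lambda>S'. R \<union> S') ` Pow (U - R)" by blast
        qed
      qed (use R in auto)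
      show "(\<Sum>S\<in>{S\<in>Pow U. R \<subseteq> S}. F R S) = (\<Sum>S'\<in>Pow (U - R). F R (R \<union> S'))"
        using sum.reindex[OF inj, of "F R"] im by simp
    qed
    also have "\<dots> = (x \<odot> (y \<odot> z)) U"
      unfolding ext_mul_finite[OF fU]
    proof (rule sum.cong[OF refl])
      fix R assume R: "R \<in> Pow U"
      have fUR: "finite (U - R)" using fU by auto
      have fR: "finite R" using R fU finite_subset by auto
      show "(\<Sum>S'\<in>Pow (U - R). F R (R \<union> S')) = inv_sign R (U - R) * x R * (y \<odot> z) (U - R)"
        unfolding ext_mul_finite[OF fUR] sum_distrib_left
      proof (rule sum.cong[OF refl])
        fix S' assume S': "S' \<in> Pow (U - R)"
        have fS': "finite S'" using S' fUR finite_subset by auto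
        define T where "T = U - R - S'"
        have fT: "finite T" using fU T_def by auto
        have e1: "R \<union> S' - R = S'" using S' by auto
        have e2: "U - (R \<union> S') = T" unfolding T_def by auto
        have e3: "U - R = S' \<union> T" using S' unfolding T_def by auto
        have s1: "inv_sign (R \<union> S') T = inv_sign R T * inv_sign S' T"
          by (rule inv_sign_Un1) (use fR fS' fT S' in auto)
        have s2: "inv_sign R (S' \<union> T) = inv_sign R S' * inv_sign R T"
          by (rule inv_sign_Un2) (use fR fS' fT S' T_def in auto)
        have s2': "inv_sign R (U - R) = inv_sign R S' * inv_sign R T" using e3 s2 by simp
        show "F R (R \<union> S') = inv_sign R (U - R) * x R * (inv_sign S' (U - R - S') * y S' * z (U - R - S'))"
          unfolding F_def e1 e2 s1 s2' T_def[symmetric] by (simp add: algebra_simps)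
      qed
    qed
    finally show ?thesis .
  qed
qed

lemma ext_one_mul: "fin x \<Longrightarrow> ext_one \<odot> x = x"
proof
  fix U assume fx: "fin x"
  show "(ext_one \<odot> x) U = x U"
  proof (cases "finite U")
    case False then show ?thesis using fx by (simp add: ext_mul_def fin_def)
  next
    case True
    have "(ext_one \<odot> x) U = (\<Sum>S\<in>Pow U. if S = {} then x U else 0)"
      unfolding ext_mul_finite[OF True] by (rule sum.cong) (auto simp: ext_one_def)
    also have "\<dots> = x U" by (simp add: sum.delta'[where a="{}", simplified] True)
    finally show ?thesis .
  qed
qed

lemma ext_mul_one: "fin x \<Longrightarrow> x \<odot> ext_one = x"
proof
  fix U assume fx: "fin x"
  show "(x \<odot> ext_one) U = x U"
  proof (cases "finite U")
    case False then show ?thesis using fx by (simp add: ext_mul_def fin_def)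
  next
    case True
    have "(x \<odot> ext_one) U = (\<Sum>S\<in>Pow U. if S = U then x U else 0)"
      unfolding ext_mul_finite[OF True]
    proof (rule sum.cong[OF refl])
      fix S assume "S \<in> Pow U"
      then have "(U - S = {}) = (S = U)" by auto
      then show "inv_sign S (U - S) * x S * ext_one (U - S) = (if S = U then x U else 0)"
        by (auto simp: ext_one_def)
    qed
    also have "\<dots> = x U" using True by simp
    finally show ?thesis .
  qed
qed

lemma ext_mul_add_right: "x \<odot> (\<lambda>U. y U + z U) = (\<lambda>U. (x \<odot> y) U + (x \<odot> z) U)"
  by (auto simp: ext_mul_def algebra_simps sum.distrib)
lemma ext_mul_add_left: "(\<lambda>U. x U + y U) \<odot> z = (\<lambda>U. (x \<odot> z) U + (y \<odot> z) U)"
  by (auto simp: ext_mul_def algebra_simps sum.distrib)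

typedef E = "{x::ext. fin x}" morphisms rep abs
  by (rule exI[of _ "\<lambda>_. 0"]) (simp add: fin_def)

setup_lifting type_definition_E

instantiation E :: ring_1
begin
lift_definition zero_E :: E is ext_zero by (simp add: fin_def ext_zero_def)
lift_definition one_E :: E is ext_one by (simp add: fin_def ext_one_def)
lift_definition plus_E :: "E \<Rightarrow> E \<Rightarrow> E" is "\<lambda>x y U. x U + y U" by (simp add: fin_def)
lift_definition uminus_E :: "E \<Rightarrow> E" is "\<lambda>x U. - x U" by (simp add: fin_def)
lift_definition minus_E :: "E \<Rightarrow> E \<Rightarrow> E" is "\<lambda>x y U. x U - y U" by (simp add: fin_def)
lift_definition times_E :: "E \<Rightarrow> E \<Rightarrow> E" is ext_mul by (rule ext_mul_fin)
instance
proof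
  fix a b c :: E
  show "a * b * c = a * (b * c)" by transfer (rule ext_mul_assoc)
  show "1 * a = a" by transfer (rule ext_one_mul)
  show "a * 1 = a" by transfer (rule ext_mul_one)
  show "(a + b) * c = a * c + b * c" by transfer (rule ext_mul_add_left)
  show "a * (b + c) = a * b + a * c" by transfer (rule ext_mul_add_right)
  show "a + b + c = a + (b + c)" by transfer (simp add: algebra_simps)
  show "a + b = b + a" by transfer (simp add: algebra_simps)
  show "0 + a = a" by transfer (simp add: ext_zero_def)
  show "- a + a = 0" by transfer (simp add: ext_zero_def)
  show "a - b = a + - b" by transfer simp
  show "(0::E) \<noteq> 1" by transfer (auto simp: ext_zero_def ext_one_def fun_eq_iff)
qed
end

lemma rep_plus: "rep (x + y) = ext_add (rep x) (rep y)" by transfer (simp add: ext_add_def)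
lemma rep_times: "rep (x * y) = rep x \<odot> rep y" by transfer simp
lemma rep_one: "rep 1 = ext_one" by transfer simp
lemma rep_zero: "rep 0 = ext_zero" by transfer simp
lemma rep_sum: "finite I \<Longrightarrow> rep (sum f I) = ext_sum (\<lambda>i. rep (f i)) I"
proof (induction I rule: finite_induct)
  case empty then show ?case by (simp add: rep_zero ext_zero_def ext_sum_def)
next
  case (insert i I) then show ?case
    by (simp add: rep_plus ext_add_def ext_sum_def)
qed

lift_definition cs :: "complex \<Rightarrow> E" is "\<lambda>c U. if U = {} then c else 0" by (simp add: fin_def)

lemma cs_mul_raw: "fin x \<Longrightarrow> ((\<lambda>U. if U = {} then c else 0) \<odot> x) = ext_scale c x"
proof
  fix U assume fx: "fin x"
  show "((\<lambda>U. if U = {} then c else 0) \<odot> x) U = ext_scale c x U"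
  proof (cases "finite U")
    case False then show ?thesis using fx by (simp add: ext_mul_def fin_def ext_scale_def)
  next
    case True
    have "((\<lambda>U. if U = {} then c else 0) \<odot> x) U = (\<Sum>S\<in>Pow U. if S = {} then c * x U else 0)"
      unfolding ext_mul_finite[OF True] by (rule sum.cong) auto
    also have "\<dots> = c * x U" by (simp add: sum.delta'[where a="{}", simplified] True)
    finally show ?thesis by (simp add: ext_scale_def)
  qed
qed

lemma mul_cs_raw: "fin x \<Longrightarrow> (x \<odot> (\<lambda>U. if U = {} then c else 0)) = ext_scale c x"
proof
  fix U assume fx: "fin x"
  show "(x \<odot> (\<lambda>U. if U = {} then c else 0)) U = ext_scale c x U"
  proof (cases "finite U")
    case False then show ?thesis using fx by (simp add: ext_mul_def fin_def ext_scale_def)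
  next
    case True
    have "(x \<odot> (\<lambda>U. if U = {} then c else 0)) U = (\<Sum>S\<in>Pow U. if S = U then c * x U else 0)"
      unfolding ext_mul_finite[OF True]
    proof (rule sum.cong[OF refl])
      fix S assume "S \<in> Pow U"
      then have "(U - S = {}) = (S = U)" by auto
      then show "inv_sign S (U - S) * x S * (if U - S = {} then c else 0) = (if S = U then c * x U else 0)"
        by auto
    qed
    also have "\<dots> = c * x U" using True by simp
    finally show ?thesis by (simp add: ext_scale_def)
  qed
qed

lemma rep_cs_mul: "rep (cs c * x) = ext_scale c (rep x)"
  by transfer (rule cs_mul_raw)
lemma cs_commute: "cs c * x = x * cs c"
  by transfer (simp add: cs_mul_raw mul_cs_raw)
lemma cs_add: "cs (a + b) = cs a + cs b" by transfer auto
lemma cs_mult: "cs (a * b) = cs a * cs b"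
proof (transfer)
  fix a b :: complex
  have f: "fin (\<lambda>U. if U = {} then b else 0)" by (simp add: fin_def)
  show "(\<lambda>U. if U = {} then a * b else 0) =
    (\<lambda>U. if U = {} then a else 0) \<odot> (\<lambda>U. if U = {} then b else 0)"
    unfolding cs_mul_raw[OF f] by (auto simp: ext_scale_def)
qed
lemma cs_one: "cs 1 = 1" by transfer (simp add: ext_one_def)
lemma cs_zero: "cs 0 = 0" by transfer (simp add: ext_zero_def)
lemma cs_uminus: "cs (- a) = - cs a" by transfer auto
lemma cs_of_nat: "cs (of_nat m) = of_nat m"
  by (induction m) (simp_all add: cs_zero cs_add cs_one)
lemma cs_of_int: "cs (of_int k) = of_int k"
proof (cases "k \<ge> 0")
  case True
  then have "k = int (nat k)" by simp
  then show ?thesis using cs_of_nat by (metis of_int_of_nat_eq)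
next
  case False
  then have "k = - int (nat (- k))" by simp
  then have "cs (of_int k) = - cs (of_nat (nat (-k)))" "(of_int k::E) = - of_nat (nat (-k))"
    by (metis cs_uminus of_int_minus of_int_of_nat_eq)+
  then show ?thesis using cs_of_nat by simp
qed

lemma two_eq_zero: "(x::E) + x = 0 \<Longrightarrow> x = 0"
proof -
  assume h: "x + x = 0"
  have "x = cs 1 * x" by (simp add: cs_one)
  also have "\<dots> = cs (1/2 + 1/2) * x" by simp
  also have "\<dots> = cs (1/2) * (x + x)" unfolding cs_add by (simp add: algebra_simps)
  finally show ?thesis using h by simp
qed

lemma neg_self_zero: "(x::E) = - x \<Longrightarrow> x = 0"
  using two_eq_zero by (metis add.right_inverse)

definition evE :: "E \<Rightarrow> bool" where "evE x \<longleftrightarrow> (\<forall>U. rep x U \<noteq> 0 \<longrightarrow> even (card U))"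
definition odE :: "E \<Rightarrow> bool" where "odE x \<longleftrightarrow> (\<forall>U. rep x U \<noteq> 0 \<longrightarrow> odd (card U))"

lemma inv_sign_sq: "inv_sign S T * inv_sign S T = 1"
  unfolding inv_sign_def power_add[symmetric] by simp

lemma inv_sign_flip:
  assumes "finite S" "finite T" "S \<inter> T = {}"
  shows "inv_sign T S = (-1) ^ (card S * card T) * inv_sign S T"
proof -
  have "inv_sign T S = (inv_sign S T * inv_sign S T) * inv_sign T S" by (simp add: inv_sign_sq)
  also have "\<dots> = inv_sign S T * (inv_sign S T * inv_sign T S)" by (simp add: algebra_simps)
  also have "\<dots> = inv_sign S T * (-1) ^ (card S * card T)" using inv_sign_swap[OF assms] by simp
  finally show ?thesis by simp
qed

lemma ext_mul_finite_rev: "finite U \<Longrightarrow> (y \<odot> x) U = (\<Sum>S\<in>Pow U. inv_sign (U - S) S * y (U - S) * x S)"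
proof -
  assume fU: "finite U"
  have b: "bij_betw (\<lambda>S. U - S) (Pow U) (Pow U)"
    by (rule bij_betw_byWitness[where f'="\<lambda>S. U - S"]) auto
  have "(y \<odot> x) U = (\<Sum>T\<in>Pow U. inv_sign T (U - T) * y T * x (U - T))"
    by (rule ext_mul_finite[OF fU])
  also have "\<dots> = (\<Sum>S\<in>Pow U. inv_sign (U - S) (U - (U - S)) * y (U - S) * x (U - (U - S)))"
    using sum.reindex_bij_betw[OF b, of "\<lambda>T. inv_sign T (U - T) * y T * x (U - T)"] by simp
  also have "\<dots> = (\<Sum>S\<in>Pow U. inv_sign (U - S) S * y (U - S) * x S)"
    by (rule sum.cong) (auto simp: double_diff)
  finally show ?thesis .
qed

lemma card_split: "finite U \<Longrightarrow> S \<subseteq> U \<Longrightarrow> card U = card S + card (U - S)"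
proof -
  assume "finite U" "S \<subseteq> U"
  moreover have "finite S" using calculation finite_subset by auto
  ultimately have "card (U - S) = card U - card S" "card S \<le> card U"
    using card_Diff_subset card_mono by auto
  then show ?thesis by simp
qed

lemma raw_prod_parity:
  assumes "\<And>S. x S \<noteq> 0 \<Longrightarrow> even (card S) = a" "\<And>T. y T \<noteq> 0 \<Longrightarrow> even (card T) = b"
    and "(x \<odot> y) U \<noteq> 0"
  shows "even (card U) = (a = b)"
proof -
  have fU: "finite U" using assms(3) by (auto simp: ext_mul_def split: if_splits)
  from assms(3) obtain S where S: "S \<in> Pow U" "inv_sign S (U - S) * x S * y (U - S) \<noteq> 0"
    unfolding ext_mul_finite[OF fU] using sum.not_neutral_contains_not_neutral by blast
  then have "x S \<noteq> 0" "y (U - S) \<noteq> 0" by auto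
  then have "even (card S) = a" "even (card (U - S)) = b" using assms by auto
  moreover have "card U = card S + card (U - S)" using card_split fU S by auto
  ultimately show ?thesis by auto
qed

lemma evE_mul: "evE x \<Longrightarrow> evE y \<Longrightarrow> evE (x * y)"
  unfolding evE_def rep_times
proof (intro allI impI)
  fix U assume "\<forall>U. rep x U \<noteq> 0 \<longrightarrow> even (card U)" "\<forall>U. rep y U \<noteq> 0 \<longrightarrow> even (card U)"
    "(rep x \<odot> rep y) U \<noteq> 0"
  then show "even (card U)" using raw_prod_parity[of "rep x" True "rep y" True U] by simp
qed
lemma odE_mul: "odE x \<Longrightarrow> odE y \<Longrightarrow> evE (x * y)"
  unfolding evE_def odE_def rep_times
proof (intro allI impI)
  fix U assume "\<forall>U. rep x U \<noteq> 0 \<longrightarrow> odd (card U)" "\<forall>U. rep y U \<noteq> 0 \<longrightarrow> odd (card U)"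
    "(rep x \<odot> rep y) U \<noteq> 0"
  then show "even (card U)" using raw_prod_parity[of "rep x" False "rep y" False U] by simp
qed
lemma evod_mul: "evE x \<Longrightarrow> odE y \<Longrightarrow> odE (x * y)"
  unfolding evE_def odE_def rep_times
proof (intro allI impI)
  fix U assume "\<forall>U. rep x U \<noteq> 0 \<longrightarrow> even (card U)" "\<forall>U. rep y U \<noteq> 0 \<longrightarrow> odd (card U)"
    "(rep x \<odot> rep y) U \<noteq> 0"
  then show "odd (card U)" using raw_prod_parity[of "rep x" True "rep y" False U] by simp
qed
lemma odev_mul: "odE x \<Longrightarrow> evE y \<Longrightarrow> odE (x * y)"
  unfolding evE_def odE_def rep_times
proof (intro allI impI)
  fix U assume "\<forall>U. rep x U \<noteq> 0 \<longrightarrow> odd (card U)" "\<forall>U. rep y U \<noteq> 0 \<longrightarrow> even (card U)"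
    "(rep x \<odot> rep y) U \<noteq> 0"
  then show "odd (card U)" using raw_prod_parity[of "rep x" False "rep y" True U] by simp
qed

lemma evE_add: "evE x \<Longrightarrow> evE y \<Longrightarrow> evE (x + y)"
  unfolding evE_def plus_E.rep_eq by (metis add.right_neutral add_0)
lemma odE_add: "odE x \<Longrightarrow> odE y \<Longrightarrow> odE (x + y)"
  unfolding odE_def plus_E.rep_eq by (metis add.right_neutral add_0)
lemma evE_uminus: "evE x \<Longrightarrow> evE (- x)"
  unfolding evE_def uminus_E.rep_eq by simp
lemma odE_uminus: "odE x \<Longrightarrow> odE (- x)"
  unfolding odE_def uminus_E.rep_eq by simp
lemma evE_zero[simp]: "evE 0" unfolding evE_def zero_E.rep_eq by (simp add: ext_zero_def)
lemma odE_zero[simp]: "odE 0" unfolding odE_def zero_E.rep_eq by (simp add: ext_zero_def)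
lemma evE_one[simp]: "evE 1" unfolding evE_def one_E.rep_eq by (simp add: ext_one_def)
lemma evE_cs[simp]: "evE (cs c)" unfolding evE_def cs.rep_eq by simp
lemma evE_diff: "evE x \<Longrightarrow> evE y \<Longrightarrow> evE (x - y)"
  unfolding diff_conv_add_uminus by (intro evE_add evE_uminus)
lemma evE_sum: "(\<And>i. i \<in> I \<Longrightarrow> evE (f i)) \<Longrightarrow> evE (sum f I)"
  by (induction I rule: infinite_finite_induct) (auto intro: evE_add)
lemma odE_sum: "(\<And>i. i \<in> I \<Longrightarrow> odE (f i)) \<Longrightarrow> odE (sum f I)"
  by (induction I rule: infinite_finite_induct) (auto intro: odE_add)
lemma evE_of_int[simp]: "evE (of_int k)" by (simp only: cs_of_int[symmetric] evE_cs)

lemma evE_commute: "evE x \<Longrightarrow> x * y = y * x"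
proof -
  assume ex: "evE x"
  have "rep x \<odot> rep y = rep y \<odot> rep x"
  proof
    fix U
    show "(rep x \<odot> rep y) U = (rep y \<odot> rep x) U"
    proof (cases "finite U")
      case False then show ?thesis by (simp add: ext_mul_def)
    next
      case fU: True
      show ?thesis unfolding ext_mul_finite[OF fU, where x="rep x" and y="rep y"] ext_mul_finite_rev[OF fU, where x="rep x" and y="rep y"]
      proof (rule sum.cong[OF refl])
        fix S assume S: "S \<in> Pow U"
        have fS: "finite S" using S fU finite_subset by auto
        show "inv_sign S (U - S) * rep x S * rep y (U - S) = inv_sign (U - S) S * rep y (U - S) * rep x S"
        proof (cases "rep x S = 0")
          case False
          then have "even (card S)" using ex by (auto simp: evE_def)
          then have "inv_sign (U - S) S = inv_sign S (U - S)"
            using inv_sign_flip[of S "U - S"] fS fU by auto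
          then show ?thesis by simp
        qed simp
      qed
    qed
  qed
  then show ?thesis by (metis rep_inject rep_times)
qed

lemma odE_anticommute: "odE x \<Longrightarrow> odE y \<Longrightarrow> x * y = - (y * x)"
proof -
  assume ox: "odE x" and oy: "odE y"
  have "rep (x * y) = rep (- (y * x))"
    unfolding rep_times uminus_E.rep_eq
  proof
    fix U
    show "(rep x \<odot> rep y) U = - (rep y \<odot> rep x) U"
    proof (cases "finite U")
      case False then show ?thesis by (simp add: ext_mul_def)
    next
      case fU: True
      show ?thesis unfolding ext_mul_finite[OF fU, where x="rep x" and y="rep y"] ext_mul_finite_rev[OF fU, where x="rep x" and y="rep y"] sum_negf[symmetric]
      proof (rule sum.cong[OF refl])
        fix S assume S: "S \<in> Pow U"
        have fS: "finite S" using S fU finite_subset by auto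
        show "inv_sign S (U - S) * rep x S * rep y (U - S) = - (inv_sign (U - S) S * rep y (U - S) * rep x S)"
        proof (cases "rep x S = 0 \<or> rep y (U - S) = 0")
          case False
          then have "odd (card S)" "odd (card (U - S))" using ox oy by (auto simp: odE_def)
          then have "inv_sign (U - S) S = - inv_sign S (U - S)"
            using inv_sign_flip[of S "U - S"] fS fU by auto
          then show ?thesis by simp
        qed auto
      qed
    qed
  qed
  then show ?thesis using rep_inject by blast
qed

lemma odE_sq: "odE x \<Longrightarrow> x * x = 0"
  using odE_anticommute[of x x] neg_self_zero by blast

definition gE :: "gen \<Rightarrow> E" where "gE g = abs (ext_gen g)"
lemma fin_gen: "fin (ext_gen g)" by (auto simp: fin_def ext_gen_def)
lemma rep_gE: "rep (gE g) = ext_gen g" unfolding gE_def using fin_gen abs_inverse by blast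
lemma odE_gE: "odE (gE g)" unfolding odE_def rep_gE by (auto simp: ext_gen_def)

typedef Ev = "{x::E. evE x}" morphisms emb mkEv
  by (rule exI[of _ 0]) simp

setup_lifting type_definition_Ev

instantiation Ev :: comm_ring_1
begin
lift_definition zero_Ev :: Ev is 0 by simp
lift_definition one_Ev :: Ev is 1 by simp
lift_definition plus_Ev :: "Ev \<Rightarrow> Ev \<Rightarrow> Ev" is "(+)" by (rule evE_add)
lift_definition uminus_Ev :: "Ev \<Rightarrow> Ev" is uminus by (rule evE_uminus)
lift_definition minus_Ev :: "Ev \<Rightarrow> Ev \<Rightarrow> Ev" is "(-)" by (rule evE_diff)
lift_definition times_Ev :: "Ev \<Rightarrow> Ev \<Rightarrow> Ev" is "(*)" by (rule evE_mul)
instance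
proof
  fix a b c :: Ev
  show "a * b * c = a * (b * c)" by transfer (simp add: mult.assoc)
  show "a * b = b * a" by transfer (simp add: evE_commute)
  show "1 * a = a" by transfer simp
  show "(a + b) * c = a * c + b * c" by transfer (simp add: distrib_right)
  show "a + b + c = a + (b + c)" by transfer (simp add: add.assoc)
  show "a + b = b + a" by transfer (simp add: add.commute)
  show "0 + a = a" by transfer simp
  show "- a + a = 0" by transfer simp
  show "a - b = a + - b" by transfer simp
  show "(0::Ev) \<noteq> 1" by transfer simp
qed
end

lemma emb_mult: "emb (x * y) = emb x * emb y" by transfer simp
lemma emb_add: "emb (x + y) = emb x + emb y" by transfer simp
lemma emb_0: "emb 0 = 0" by transfer simp
lemma emb_1: "emb 1 = 1" by transfer simp
lemma emb_uminus: "emb (- x) = - emb x" by transfer simp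
lemma emb_sum: "emb (sum f I) = (\<Sum>i\<in>I. emb (f i))"
  by (induction I rule: infinite_finite_induct) (simp_all add: emb_0 emb_add)
lemma emb_of_int: "emb (of_int k) = of_int k"
proof -
  have h: "emb (of_nat m) = of_nat m" for m
    by (induction m) (simp_all add: emb_0 emb_add emb_1)
  show ?thesis
  proof (cases "k \<ge> 0")
    case True
    then have "k = int (nat k)" by simp
    then show ?thesis using h by (metis of_int_of_nat_eq)
  next
    case False
    then have "k = - int (nat (- k))" by simp
    then have "emb (of_int k) = - emb (of_nat (nat (-k)))" "(of_int k::E) = - of_nat (nat (-k))"
      by (metis emb_uminus of_int_minus of_int_of_nat_eq)+
    then show ?thesis using h by simp
  qed
qed
lemma emb_evE: "evE (emb x)" using emb by simp
lemma emb_central: "emb x * y = y * emb x" using evE_commute emb_evE by blast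
lemma emb_inject': "emb x = emb y \<Longrightarrow> x = y" by (simp add: emb_inject)
lemma emb_mkEv: "evE x \<Longrightarrow> emb (mkEv x) = x" by (simp add: mkEv_inverse)

definition cv :: "complex \<Rightarrow> Ev" where "cv c = mkEv (cs c)"
lemma emb_cv: "emb (cv c) = cs c" unfolding cv_def by (simp add: emb_mkEv)

definition mmG :: "nat \<Rightarrow> (nat \<Rightarrow> nat \<Rightarrow> 'a::semiring_1) \<Rightarrow> (nat \<Rightarrow> nat \<Rightarrow> 'a) \<Rightarrow> nat \<Rightarrow> nat \<Rightarrow> 'a" where
  "mmG n X Y = (\<lambda>i j. \<Sum>k\<in>{1..n}. X i k * Y k j)"
definition midG :: "nat \<Rightarrow> nat \<Rightarrow> 'a::semiring_1" where "midG = (\<lambda>i j. if i = j then 1 else 0)"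
fun mpowG :: "nat \<Rightarrow> (nat \<Rightarrow> nat \<Rightarrow> 'a::semiring_1) \<Rightarrow> nat \<Rightarrow> nat \<Rightarrow> nat \<Rightarrow> 'a" where
  "mpowG n X 0 = midG"
| "mpowG n X (Suc k) = mmG n (mpowG n X k) X"

definition meq :: "nat \<Rightarrow> (nat \<Rightarrow> nat \<Rightarrow> 'a) \<Rightarrow> (nat \<Rightarrow> nat \<Rightarrow> 'a) \<Rightarrow> bool" where
  "meq n X Y \<longleftrightarrow> (\<forall>i\<in>{1..n}. \<forall>j\<in>{1..n}. X i j = Y i j)"

lemma mm_assoc: "mmG n (mmG n X Y) Z = mmG n X (mmG n Y Z)"
proof (intro ext)
  fix i j
  have "mmG n (mmG n X Y) Z i j = (\<Sum>k\<in>{1..n}. \<Sum>l\<in>{1..n}. X i l * Y l k * Z k j)"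
    unfolding mmG_def by (simp add: sum_distrib_right)
  also have "\<dots> = (\<Sum>l\<in>{1..n}. \<Sum>k\<in>{1..n}. X i l * Y l k * Z k j)" by (rule sum.swap)
  also have "\<dots> = mmG n X (mmG n Y Z) i j"
    unfolding mmG_def by (simp add: sum_distrib_left mult.assoc)
  finally show "mmG n (mmG n X Y) Z i j = mmG n X (mmG n Y Z) i j" .
qed

lemma mm_cong_gen: "(\<And>k. k \<in> {1..n} \<Longrightarrow> X i k = X' i k) \<Longrightarrow> (\<And>k. k \<in> {1..n} \<Longrightarrow> Y k j = Y' k j)
  \<Longrightarrow> mmG n X Y i j = mmG n X' Y' i j"
  unfolding mmG_def by (rule sum.cong) auto

lemma meq_mm: "meq n X X' \<Longrightarrow> meq n Y Y' \<Longrightarrow> meq n (mmG n X Y) (mmG n X' Y')"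
  unfolding meq_def by (auto intro!: mm_cong_gen)
lemma meq_refl: "meq n X X" by (simp add: meq_def)
lemma meq_sym: "meq n X Y \<Longrightarrow> meq n Y X" by (simp add: meq_def)
lemma meq_trans: "meq n X Y \<Longrightarrow> meq n Y Z \<Longrightarrow> meq n X Z" by (simp add: meq_def)

lemma mid_left: "i \<in> {1..n} \<Longrightarrow> mmG n midG X i j = X i j"
proof -
  assume i: "i \<in> {1..n}"
  have "mmG n midG X i j = (\<Sum>k\<in>{1..n}. if i = k then X k j else 0)"
    unfolding mmG_def midG_def by (rule sum.cong) auto
  also have "\<dots> = X i j" using i by (simp add: sum.delta)
  finally show ?thesis .
qed
lemma mid_right: "j \<in> {1..n} \<Longrightarrow> mmG n X midG i j = X i j"
proof -
  assume j: "j \<in> {1..n}"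
  have "mmG n X midG i j = (\<Sum>k\<in>{1..n}. if k = j then X i k else 0)"
    unfolding mmG_def midG_def by (rule sum.cong) auto
  also have "\<dots> = X i j" using j by (simp add: sum.delta')
  finally show ?thesis .
qed

lemma mpow_comm: "meq n (mmG n X (mpowG n X q)) (mpowG n X (Suc q))"
proof (induction q)
  case 0 then show ?case by (simp add: meq_def mid_left mid_right)
next
  case (Suc q)
  have "mmG n X (mpowG n X (Suc q)) = mmG n (mmG n X (mpowG n X q)) X" by (simp add: mm_assoc)
  moreover have "meq n (mmG n (mmG n X (mpowG n X q)) X) (mmG n (mpowG n X (Suc q)) X)"
    by (rule meq_mm[OF Suc meq_refl])
  ultimately show ?case by simp
qed

lemma mpow_add: "j \<in> {1..n} \<Longrightarrow> mmG n (mpowG n X a) (mpowG n X b) i j = mpowG n X (a + b) i j"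
proof (induction b arbitrary: j)
  case 0 then show ?case by (simp add: mid_right)
next
  case (Suc b)
  have "mmG n (mpowG n X a) (mpowG n X (Suc b)) i j = mmG n (mmG n (mpowG n X a) (mpowG n X b)) X i j"
    by (simp add: mm_assoc)
  also have "\<dots> = mmG n (mpowG n X (a + b)) X i j"
    by (rule mm_cong_gen) (use Suc in auto)
  finally show ?case by simp
qed

lemma emb_mm: "emb (mmG n X Y i j) = mmG n (\<lambda>i j. emb (X i j)) (\<lambda>i j. emb (Y i j)) i j"
  unfolding mmG_def by (simp add: emb_sum emb_mult)
lemma emb_mpow: "emb (mpowG n X q i j) = mpowG n (\<lambda>i j. emb (X i j)) q i j"
proof (induction q arbitrary: i j)
  case 0 then show ?case by (simp add: midG_def emb_0 emb_1)
next
  case (Suc q) then show ?case by (simp add: emb_mm)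
qed

definition aE :: "nat \<Rightarrow> nat \<Rightarrow> E" where
  "aE i j = (if i < j then gE (True, i, j) else if j < i then - gE (True, j, i) else 0)"
definition bE :: "nat \<Rightarrow> nat \<Rightarrow> E" where
  "bE i j = gE (False, min i j, max i j)"

lemma rep_aE: "rep (aE i j) = gen_a i j"
  unfolding aE_def gen_a_def by (auto simp: rep_gE uminus_E.rep_eq rep_zero ext_scale_def)
lemma rep_bE: "rep (bE i j) = gen_b i j"
  unfolding bE_def gen_b_def by (simp add: rep_gE)

lemma aE_anti: "aE j i = - aE i j" unfolding aE_def by auto
lemma bE_sym: "bE j i = bE i j" unfolding bE_def by (simp add: min.commute max.commute)
lemma odE_aE: "odE (aE i j)" unfolding aE_def by (auto intro: odE_gE odE_uminus)
lemma odE_bE: "odE (bE i j)" unfolding bE_def by (rule odE_gE)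

definition CM :: "nat \<Rightarrow> nat \<Rightarrow> nat \<Rightarrow> E" where "CM n = mmG n aE bE"
definition BAM :: "nat \<Rightarrow> nat \<Rightarrow> nat \<Rightarrow> E" where "BAM n = mmG n bE aE"

lemma evE_mm_oo: "(\<And>k. odE (X i k)) \<Longrightarrow> (\<And>k. odE (Y k j)) \<Longrightarrow> evE (mmG n X Y i j)"
  unfolding mmG_def by (intro evE_sum odE_mul) auto
lemma evE_mm_ee: "(\<And>k. evE (X i k)) \<Longrightarrow> (\<And>k. evE (Y k j)) \<Longrightarrow> evE (mmG n X Y i j)"
  unfolding mmG_def by (intro evE_sum evE_mul) auto
lemma odE_mm_eo: "(\<And>k. evE (X i k)) \<Longrightarrow> (\<And>k. odE (Y k j)) \<Longrightarrow> odE (mmG n X Y i j)"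
  unfolding mmG_def by (intro odE_sum evod_mul) auto

lemma evE_CM: "evE (CM n i j)" unfolding CM_def by (rule evE_mm_oo) (simp_all add: odE_aE odE_bE)
lemma evE_BAM: "evE (BAM n i j)" unfolding BAM_def by (rule evE_mm_oo) (simp_all add: odE_aE odE_bE)

lemma evE_mpow: "(\<And>i j. evE (X i j)) \<Longrightarrow> evE (mpowG n X q i j)"
proof (induction q arbitrary: i j)
  case 0 then show ?case by (simp add: midG_def)
next
  case (Suc q) then show ?case by (simp add: evE_mm_ee)
qed

lemma CM_trans: "CM n k i = BAM n i k"
  unfolding CM_def BAM_def mmG_def
proof (rule sum.cong[OF refl])
  fix l
  have "bE i l * aE l k = - (aE l k * bE i l)" by (rule odE_anticommute) (simp_all add: odE_aE odE_bE)
  then show "aE k l * bE l i = bE i l * aE l k" by (simp add: aE_anti[of l k] bE_sym[of i l])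
qed

lemma Cpow_trans: "i \<in> {1..n} \<Longrightarrow> j \<in> {1..n} \<Longrightarrow> mpowG n (CM n) q j i = mpowG n (BAM n) q i j"
proof (induction q arbitrary: i j)
  case 0 then show ?case by (simp add: midG_def)
next
  case (Suc q)
  have "mpowG n (CM n) (Suc q) j i = (\<Sum>k\<in>{1..n}. mpowG n (CM n) q j k * CM n k i)" by (simp add: mmG_def)
  also have "\<dots> = (\<Sum>k\<in>{1..n}. BAM n i k * mpowG n (BAM n) q k j)"
  proof (rule sum.cong[OF refl])
    fix k assume k: "k \<in> {1..n}"
    have "mpowG n (CM n) q j k * CM n k i = mpowG n (BAM n) q k j * BAM n i k"
      using Suc.IH[OF k Suc.prems(2)] CM_trans[of n k i] by (simp only:)
    also have "\<dots> = BAM n i k * mpowG n (BAM n) q k j"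
      by (rule evE_commute) (rule evE_mpow, rule evE_BAM)
    finally show "mpowG n (CM n) q j k * CM n k i = BAM n i k * mpowG n (BAM n) q k j" .
  qed
  also have "\<dots> = mmG n (BAM n) (mpowG n (BAM n) q) i j" by (simp add: mmG_def)
  also have "\<dots> = mpowG n (BAM n) (Suc q) i j"
    using mpow_comm[of n "BAM n" q] Suc.prems by (simp add: meq_def)
  finally show ?case .
qed

lemma CA: "meq n (mmG n (mpowG n (CM n) q) aE) (mmG n aE (mpowG n (BAM n) q))"
proof (induction q)
  case 0 then show ?case by (simp add: meq_def mid_left mid_right)
next
  case (Suc q)
  have e1: "mmG n (mpowG n (CM n) (Suc q)) aE = mmG n (mmG n (mpowG n (CM n) q) aE) (BAM n)"
    by (simp add: CM_def BAM_def mm_assoc)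
  have e2: "mmG n aE (mpowG n (BAM n) (Suc q)) = mmG n (mmG n aE (mpowG n (BAM n) q)) (BAM n)"
    by (simp add: mm_assoc)
  show ?case unfolding e1 e2 by (rule meq_mm[OF Suc meq_refl])
qed

lemma trace_zero: "(\<Sum>j\<in>{1..n}. mpowG n (CM n) (Suc r) j j) = 0"
proof -
  define Y where "Y = mmG n (mpowG n (BAM n) r) bE"
  have oY: "odE (Y k j)" for k j unfolding Y_def
    by (rule odE_mm_eo) (simp_all add: evE_mpow evE_BAM odE_bE)
  have e1: "mpowG n (CM n) (Suc r) = mmG n (mmG n (mpowG n (CM n) r) aE) bE"
    by (simp add: CM_def mm_assoc)
  have "meq n (mmG n (mmG n (mpowG n (CM n) r) aE) bE) (mmG n (mmG n aE (mpowG n (BAM n) r)) bE)"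
    by (rule meq_mm[OF CA meq_refl])
  then have e2: "meq n (mpowG n (CM n) (Suc r)) (mmG n aE Y)"
    unfolding e1 Y_def by (simp add: mm_assoc)
  have "(\<Sum>j\<in>{1..n}. mpowG n (CM n) (Suc r) j j) = (\<Sum>j\<in>{1..n}. \<Sum>k\<in>{1..n}. aE j k * Y k j)"
    using e2 by (auto simp: meq_def mmG_def intro!: sum.cong)
  also have "\<dots> = (\<Sum>j\<in>{1..n}. \<Sum>k\<in>{1..n}. - (Y k j * aE j k))"
    by (intro sum.cong refl odE_anticommute odE_aE oY)
  also have "\<dots> = - (\<Sum>k\<in>{1..n}. \<Sum>j\<in>{1..n}. Y k j * aE j k)"
    by (subst sum.swap) (simp add: sum_negf)
  also have "\<dots> = - (\<Sum>k\<in>{1..n}. mmG n Y aE k k)" by (simp add: mmG_def)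
  also have "\<dots> = - (\<Sum>k\<in>{1..n}. mpowG n (BAM n) (Suc r) k k)"
    unfolding Y_def by (simp add: mm_assoc BAM_def)
  also have "\<dots> = - (\<Sum>k\<in>{1..n}. mpowG n (CM n) (Suc r) k k)"
    using Cpow_trans[of _ n _ "Suc r"] by (metis (no_types, lifting) sum.cong)
  finally show ?thesis using neg_self_zero by blast
qed

definition MN :: "nat \<Rightarrow> nat \<Rightarrow> nat \<Rightarrow> nat \<Rightarrow> E" where "MN n N = mmG n aE (mpowG n (BAM n) N)"

lemma MN_anti: "i \<in> {1..n} \<Longrightarrow> j \<in> {1..n} \<Longrightarrow> MN n N j i = - MN n N i j"
proof -
  assume i: "i \<in> {1..n}" and j: "j \<in> {1..n}"
  have "MN n N j i = mmG n (mpowG n (CM n) N) aE j i" using CA[of n N] i j by (simp add: meq_def MN_def)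
  also have "\<dots> = (\<Sum>k\<in>{1..n}. - (aE i k * mpowG n (BAM n) N k j))"
    unfolding mmG_def
  proof (rule sum.cong[OF refl])
    fix k assume k: "k \<in> {1..n}"
    have "mpowG n (CM n) N j k * aE k i = aE k i * mpowG n (CM n) N j k"
      by (rule evE_commute) (rule evE_mpow, rule evE_CM)
    then show "mpowG n (CM n) N j k * aE k i = - (aE i k * mpowG n (BAM n) N k j)"
      using Cpow_trans[OF k j] aE_anti[of k i] by simp
  qed
  also have "\<dots> = - MN n N i j" by (simp add: MN_def mmG_def sum_negf)
  finally show ?thesis .
qed

lemma sign_transpose_comp:
  assumes "finite D" "q permutes D" "a \<noteq> b" "a \<in> D" "b \<in> D"
  shows "sign (transpose a b \<circ> q) = - sign q"
proof -
  have pq: "permutation q" using assms permutes_imp_permutation by blast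
  have "sign (transpose a b \<circ> q) = sign (transpose a b) * sign q"
    by (rule sign_compose[OF permutation_swap_id pq])
  then show ?thesis using sign_swap_id[of a b] assms(3) by simp
qed

lemma alt_zero:
  fixes H :: "(nat \<Rightarrow> nat) \<Rightarrow> (nat \<Rightarrow> nat) \<Rightarrow> E"
  assumes fD: "finite D" and big: "n < card D"
  shows "(\<Sum>\<sigma>\<in>{\<sigma>. \<sigma> permutes D}. \<Sum>i\<in>PiE D (\<lambda>_. {1..n}). of_int (sign \<sigma>) * H i (i \<circ> \<sigma>)) = 0"
proof -
  have "(\<Sum>\<sigma>\<in>{\<sigma>. \<sigma> permutes D}. \<Sum>i\<in>PiE D (\<lambda>_. {1..n}). of_int (sign \<sigma>) * H i (i \<circ> \<sigma>))
     = (\<Sum>i\<in>PiE D (\<lambda>_. {1..n}). \<Sum>\<sigma>\<in>{\<sigma>. \<sigma> permutes D}. of_int (sign \<sigma>) * H i (i \<circ> \<sigma>))"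
    by (rule sum.swap)
  also have "\<dots> = 0"
  proof (rule sum.neutral, rule ballI)
    fix i assume i: "i \<in> PiE D (\<lambda>_. {1..n})"
    have "\<not> inj_on i D"
    proof
      assume inj: "inj_on i D"
      have "i ` D \<subseteq> {1..n}" using i by auto
      then have "card (i ` D) \<le> n" using card_mono[of "{1..n}"] by fastforce
      then show False using card_image[OF inj] big by simp
    qed
    then obtain a b where ab: "a \<in> D" "b \<in> D" "a \<noteq> b" "i a = i b" unfolding inj_on_def by blast
    define \<tau> where "\<tau> = transpose a b"
    have tp: "\<tau> permutes D" unfolding \<tau>_def using ab by (simp add: permutes_swap_id)
    have it: "i \<circ> (\<tau> \<circ> \<sigma>) = i \<circ> \<sigma>" for \<sigma>
    proof
      fix x show "(i \<circ> (\<tau> \<circ> \<sigma>)) x = (i \<circ> \<sigma>) x"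
        using ab(4) by (simp add: \<tau>_def transpose_def)
    qed
    define X where "X = (\<Sum>\<sigma>\<in>{\<sigma>. \<sigma> permutes D}. of_int (sign \<sigma>) * H i (i \<circ> \<sigma>))"
    have "X = (\<Sum>\<sigma>\<in>{\<sigma>. \<sigma> permutes D}. of_int (sign (\<tau> \<circ> \<sigma>)) * H i (i \<circ> (\<tau> \<circ> \<sigma>)))"
      unfolding X_def by (rule setum_permutations_compose_left[OF tp])
    also have "\<dots> = (\<Sum>\<sigma>\<in>{\<sigma>. \<sigma> permutes D}. - (of_int (sign \<sigma>) * H i (i \<circ> \<sigma>)))"
    proof (rule sum.cong[OF refl])
      fix \<sigma> assume "\<sigma> \<in> {\<sigma>. \<sigma> permutes D}"
      then have "sign (\<tau> \<circ> \<sigma>) = - sign \<sigma>" unfolding \<tau>_def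
        using sign_transpose_comp[OF fD _ ab(3) ab(1) ab(2)] by simp
      then show "of_int (sign (\<tau> \<circ> \<sigma>)) * H i (i \<circ> (\<tau> \<circ> \<sigma>)) = - (of_int (sign \<sigma>) * H i (i \<circ> \<sigma>))"
        by (simp add: it)
    qed
    also have "\<dots> = - X" unfolding X_def by (simp add: sum_negf)
    finally have "X = - X" .
    then show "(\<Sum>\<sigma>\<in>{\<sigma>. \<sigma> permutes D}. of_int (sign \<sigma>) * H i (i \<circ> \<sigma>)) = 0"
      using neg_self_zero unfolding X_def by blast
  qed
  finally show ?thesis .
qed

lemma sum_PiE_insert:
  assumes "x \<notin> S"
  shows "(\<Sum>i\<in>PiE (insert x S) T. h i) = (\<Sum>j\<in>T x. \<Sum>i\<in>PiE S T. h (i(x := j)))"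
proof -
  have "(\<Sum>i\<in>PiE (insert x S) T. h i) = (\<Sum>(j, i)\<in>T x \<times> PiE S T. h (i(x := j)))"
    unfolding PiE_insert_eq using sum.reindex[OF inj_combinator[OF assms], of h]
    by (simp add: case_prod_unfold)
  also have "\<dots> = (\<Sum>j\<in>T x. \<Sum>i\<in>PiE S T. h (i(x := j)))"
    by (rule sum.cartesian_product[symmetric])
  finally show ?thesis .
qed

definition Cv :: "nat \<Rightarrow> nat \<Rightarrow> nat \<Rightarrow> Ev" where "Cv n i j = mkEv (CM n i j)"
abbreviation Cp :: "nat \<Rightarrow> nat \<Rightarrow> nat \<Rightarrow> nat \<Rightarrow> Ev" where "Cp n q \<equiv> mpowG n (Cv n) q"

lemma emb_Cv: "emb (Cv n i j) = CM n i j" unfolding Cv_def by (simp add: emb_mkEv evE_CM)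
lemma emb_Cp: "emb (Cp n q i j) = mpowG n (CM n) q i j"
  unfolding emb_mpow emb_Cv by simp

lemma trace_zero_Ev: "0 < q \<Longrightarrow> (\<Sum>j\<in>{1..n}. Cp n q j j) = 0"
proof -
  assume "0 < q"
  then obtain r where q: "q = Suc r" using gr0_conv_Suc by blast
  have "emb (\<Sum>j\<in>{1..n}. Cp n q j j) = emb 0"
    unfolding emb_sum emb_Cp emb_0 q by (rule trace_zero)
  then show ?thesis by (rule emb_inject')
qed

definition Vec :: "nat \<Rightarrow> (nat \<Rightarrow> complex) \<Rightarrow> nat \<Rightarrow> nat \<Rightarrow> Ev" where
  "Vec n u \<alpha> j = (\<Sum>k\<in>{1..n}. cv (u k) * Cp n \<alpha> k j)"

lemma Vec_step: "y \<in> {1..n} \<Longrightarrow> (\<Sum>j\<in>{1..n}. Vec n u \<alpha> j * Cp n b j y) = Vec n u (\<alpha> + b) y"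
proof -
  assume y: "y \<in> {1..n}"
  have "(\<Sum>j\<in>{1..n}. Vec n u \<alpha> j * Cp n b j y) = (\<Sum>k\<in>{1..n}. cv (u k) * (\<Sum>j\<in>{1..n}. Cp n \<alpha> k j * Cp n b j y))"
    unfolding Vec_def sum_distrib_right sum_distrib_left
    by (subst sum.swap) (simp add: mult.assoc)
  also have "\<dots> = Vec n u (\<alpha> + b) y"
    unfolding Vec_def using mpow_add[OF y, of "Cv n" \<alpha> b] by (simp add: mmG_def)
  finally show ?thesis .
qed

lemma Cp_step: "y \<in> {1..n} \<Longrightarrow> (\<Sum>j\<in>{1..n}. Cp n a x j * Cp n b j y) = Cp n (a + b) x y"
  using mpow_add[of y n "Cv n" a b x] by (simp add: mmG_def)

definition termG :: "nat \<Rightarrow> (nat \<Rightarrow> complex) \<Rightarrow> (nat \<Rightarrow> complex) \<Rightarrow> nat \<Rightarrow> nat \<Rightarrow> nat set \<Rightarrow> (nat \<Rightarrow> nat)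
   \<Rightarrow> nat \<Rightarrow> nat \<Rightarrow> (nat \<Rightarrow> nat) \<Rightarrow> (nat \<Rightarrow> nat) \<Rightarrow> E" where
  "termG n w v s t P p \<alpha> \<beta> \<sigma> i = emb (of_int (sign \<sigma>) * (\<Prod>k\<in>P. Cp n (p k) (i k) (i (\<sigma> k)))
      * Vec n w \<alpha> (i (\<sigma> s)) * Vec n v \<beta> (i (\<sigma> t))) * aE (i s) (i t)"

definition GG :: "nat \<Rightarrow> (nat \<Rightarrow> complex) \<Rightarrow> (nat \<Rightarrow> complex) \<Rightarrow> nat \<Rightarrow> nat \<Rightarrow> nat set \<Rightarrow> (nat \<Rightarrow> nat)
   \<Rightarrow> nat \<Rightarrow> nat \<Rightarrow> E" where
  "GG n w v s t P p \<alpha> \<beta> = (\<Sum>\<sigma>\<in>{\<sigma>. \<sigma> permutes insert s (insert t P)}.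
      \<Sum>i\<in>PiE (insert s (insert t P)) (\<lambda>_. {1..n}). termG n w v s t P p \<alpha> \<beta> \<sigma> i)"

lemma GG_big_zero:
  assumes "finite P" "n < card (insert s (insert t P))"
  shows "GG n w v s t P p \<alpha> \<beta> = 0"
proof -
  define H where "H i j = emb ((\<Prod>k\<in>P. Cp n (p k) (i k) (j k)) * Vec n w \<alpha> (j s) * Vec n v \<beta> (j t)) * aE (i s) (i t)"
    for i j :: "nat \<Rightarrow> nat"
  have "GG n w v s t P p \<alpha> \<beta> = (\<Sum>\<sigma>\<in>{\<sigma>. \<sigma> permutes insert s (insert t P)}.
      \<Sum>i\<in>PiE (insert s (insert t P)) (\<lambda>_. {1..n}). of_int (sign \<sigma>) * H i (i \<circ> \<sigma>))"
    unfolding GG_def termG_def H_def by (simp add: emb_mult emb_of_int mult.assoc)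
  also have "\<dots> = 0" by (rule alt_zero) (use assms in auto)
  finally show ?thesis .
qed

lemma sign_transpose_comp2:
  assumes "finite D" "q permutes D" "a \<noteq> b"
  shows "sign (transpose a b \<circ> q) = - sign q"
proof -
  have pq: "permutation q" using assms permutes_imp_permutation by blast
  have "sign (transpose a b \<circ> q) = sign (transpose a b) * sign q"
    by (rule sign_compose[OF permutation_swap_id pq])
  then show ?thesis using sign_swap_id[of a b] assms(3) by simp
qed

lemma term_eval:
  assumes fD: "finite D" and q: "q permutes D" and c: "c \<in> D" and mD: "m \<notin> D"
    and PD: "P \<subseteq> D" and sD: "s \<in> D" and tD: "t \<in> D" and mP: "m \<notin> P"
  shows "termG n w v s t (insert m P) p \<alpha> \<beta> (transpose m (q c) \<circ> q) (i(m := j)) =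
    emb (- of_int (sign q) * Cp n (p m) j (i (q c)) * (\<Prod>k\<in>P. Cp n (p k) (i k) (if k = c then j else i (q k)))
      * Vec n w \<alpha> (if s = c then j else i (q s)) * Vec n v \<beta> (if t = c then j else i (q t))) * aE (i s) (i t)"
proof -
  define \<sigma> where "\<sigma> = transpose m (q c) \<circ> q"
  have qD: "q k \<in> D" if "k \<in> D" for k using permutes_in_image[OF q] that by simp
  have qc: "q c \<in> D" using qD c by blast
  have qm: "q m = m" by (rule permutes_not_in[OF q mD])
  have \<sigma>k: "(i(m := j)) (\<sigma> k) = (if k = c then j else i (q k))" if k: "k \<in> D" for k
  proof -
    have n1: "q k \<noteq> m" using qD[OF k] mD by auto
    have n2: "(q k = q c) = (k = c)" using permutes_inj[OF q] by (simp add: inj_eq)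
    show ?thesis
    proof (cases "k = c")
      case True then show ?thesis unfolding \<sigma>_def by (simp add: transpose_def)
    next
      case False then have "q k \<noteq> q c" using n2 by simp
      then show ?thesis using False n1 unfolding \<sigma>_def by (simp add: transpose_def)
    qed
  qed
  have \<sigma>m: "(i(m := j)) (\<sigma> m) = i (q c)"
  proof -
    have "q c \<noteq> m" using qc mD by auto
    then show ?thesis using qm unfolding \<sigma>_def by (simp add: transpose_def)
  qed
  have sg: "sign \<sigma> = - sign q"
  proof -
    have "m \<noteq> q c" using qc mD by blast
    then show ?thesis unfolding \<sigma>_def by (rule sign_transpose_comp2[OF fD q])
  qed
  have im: "(i(m := j)) k = i k" if "k \<in> D" for k using that mD by auto
  have prodeq: "(\<Prod>k\<in>P. Cp n (p k) ((i(m := j)) k) ((i(m := j)) (\<sigma> k))) =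
      (\<Prod>k\<in>P. Cp n (p k) (i k) (if k = c then j else i (q k)))"
  proof (rule prod.cong[OF refl])
    fix k assume "k \<in> P"
    then have k: "k \<in> D" using PD by blast
    show "Cp n (p k) ((i(m := j)) k) ((i(m := j)) (\<sigma> k)) = Cp n (p k) (i k) (if k = c then j else i (q k))"
      by (simp only: im[OF k] \<sigma>k[OF k])
  qed
  have fP: "finite P" using PD fD finite_subset by blast
  show ?thesis
    unfolding termG_def \<sigma>_def[symmetric] prod.insert[OF fP mP] prodeq sg
    using \<sigma>k[OF sD] \<sigma>k[OF tD] \<sigma>m im[OF sD] im[OF tD]
    by (simp add: mult.assoc)
qed

context
  fixes n :: nat and w v :: "nat \<Rightarrow> complex" and s t m :: nat and P :: "nat set"
    and q i :: "nat \<Rightarrow> nat"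
  assumes fP: "finite P" and st: "s \<noteq> t" and sP: "s \<notin> P" and tP: "t \<notin> P" and mP: "m \<notin> P"
    and ms: "m \<noteq> s" and mt: "m \<noteq> t"
    and q: "q permutes insert s (insert t P)" and i: "i \<in> PiE (insert s (insert t P)) (\<lambda>_. {1..n})"
begin

lemma fD: "finite (insert s (insert t P))" using fP by simp
lemma mD: "m \<notin> insert s (insert t P)" using mP ms mt by simp
lemma iq: "k \<in> insert s (insert t P) \<Longrightarrow> i (q k) \<in> {1..n}"
proof -
  assume "k \<in> insert s (insert t P)"
  then have "q k \<in> insert s (insert t P)" using permutes_in_image[OF q] by simp
  then show ?thesis by (rule PiE_mem[OF i])
qed

lemma term_eval': "c \<in> insert s (insert t P) \<Longrightarrow>
  termG n w v s t (insert m P) p \<alpha> \<beta> (transpose m (q c) \<circ> q) (i(m := j)) =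
    emb (- of_int (sign q) * Cp n (p m) j (i (q c)) * (\<Prod>k\<in>P. Cp n (p k) (i k) (if k = c then j else i (q k)))
      * Vec n w \<alpha> (if s = c then j else i (q s)) * Vec n v \<beta> (if t = c then j else i (q t))) * aE (i s) (i t)"
  by (rule term_eval[OF fD q _ mD _ _ _ mP]) auto

lemma sum_emb: "(\<Sum>j\<in>J. emb (X j) * a) = emb (\<Sum>j\<in>J. X j) * a"
  by (simp add: emb_sum sum_distrib_right)

lemma caseP:
  assumes c: "c \<in> P"
  shows "(\<Sum>j\<in>{1..n}. termG n w v s t (insert m P) p \<alpha> \<beta> (transpose m (q c) \<circ> q) (i(m := j)))
    = - termG n w v s t P (p(c := p c + p m)) \<alpha> \<beta> q i"
proof -
  have cD: "c \<in> insert s (insert t P)" using c by simp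
  have sc: "s \<noteq> c" "t \<noteq> c" using c sP tP by auto
  define R where "R = (\<Prod>k\<in>P - {c}. Cp n (p k) (i k) (i (q k)))"
  define K where "K = - of_int (sign q) * R * Vec n w \<alpha> (i (q s)) * Vec n v \<beta> (i (q t))"
  have prodj: "(\<Prod>k\<in>P. Cp n (p k) (i k) (if k = c then j else i (q k))) = Cp n (p c) (i c) j * R" for j
  proof -
    define f where "f k = Cp n (p k) (i k) (if k = c then j else i (q k))" for k
    have "(\<Prod>k\<in>P. f k) = f c * (\<Prod>k\<in>P - {c}. f k)" by (rule prod.remove[OF fP c])
    then have "(\<Prod>k\<in>P. Cp n (p k) (i k) (if k = c then j else i (q k)))
      = Cp n (p c) (i c) j * (\<Prod>k\<in>P - {c}. Cp n (p k) (i k) (if k = c then j else i (q k)))"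
      unfolding f_def by simp
    also have "(\<Prod>k\<in>P - {c}. Cp n (p k) (i k) (if k = c then j else i (q k))) = R"
      unfolding R_def by (rule prod.cong) auto
    finally show ?thesis .
  qed
  have prodT: "(\<Prod>k\<in>P. Cp n ((p(c := p c + p m)) k) (i k) (i (q k))) = Cp n (p c + p m) (i c) (i (q c)) * R"
  proof -
    define f where "f k = Cp n ((p(c := p c + p m)) k) (i k) (i (q k))" for k
    have "(\<Prod>k\<in>P. f k) = f c * (\<Prod>k\<in>P - {c}. f k)" by (rule prod.remove[OF fP c])
    then have "(\<Prod>k\<in>P. Cp n ((p(c := p c + p m)) k) (i k) (i (q k)))
      = Cp n (p c + p m) (i c) (i (q c)) * (\<Prod>k\<in>P - {c}. Cp n ((p(c := p c + p m)) k) (i k) (i (q k)))"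
      unfolding f_def by simp
    also have "(\<Prod>k\<in>P - {c}. Cp n ((p(c := p c + p m)) k) (i k) (i (q k))) = R"
      unfolding R_def by (rule prod.cong) auto
    finally show ?thesis .
  qed
  have "(\<Sum>j\<in>{1..n}. termG n w v s t (insert m P) p \<alpha> \<beta> (transpose m (q c) \<circ> q) (i(m := j)))
     = (\<Sum>j\<in>{1..n}. emb (K * (Cp n (p c) (i c) j * Cp n (p m) j (i (q c)))) * aE (i s) (i t))"
  proof (rule sum.cong[OF refl])
    fix j
    show "termG n w v s t (insert m P) p \<alpha> \<beta> (transpose m (q c) \<circ> q) (i(m := j)) =
      emb (K * (Cp n (p c) (i c) j * Cp n (p m) j (i (q c)))) * aE (i s) (i t)"
      unfolding term_eval'[OF cD] prodj K_def using sc by (simp add: mult_ac)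
  qed
  also have "\<dots> = emb (K * Cp n (p c + p m) (i c) (i (q c))) * aE (i s) (i t)"
    unfolding sum_emb sum_distrib_left[symmetric] Cp_step[OF iq[OF cD]] ..
  also have "\<dots> = - termG n w v s t P (p(c := p c + p m)) \<alpha> \<beta> q i"
    unfolding termG_def prodT K_def by (simp add: mult_ac emb_uminus)
  finally show ?thesis .
qed

lemma caseS:
  shows "(\<Sum>j\<in>{1..n}. termG n w v s t (insert m P) p \<alpha> \<beta> (transpose m (q s) \<circ> q) (i(m := j)))
    = - termG n w v s t P p (\<alpha> + p m) \<beta> q i"
proof -
  have cD: "s \<in> insert s (insert t P)" by simp
  define R where "R = (\<Prod>k\<in>P. Cp n (p k) (i k) (i (q k)))"
  define K where "K = - of_int (sign q) * R * Vec n v \<beta> (i (q t))"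
  have prodj: "(\<Prod>k\<in>P. Cp n (p k) (i k) (if k = s then j else i (q k))) = R" for j
    unfolding R_def by (rule prod.cong) (use sP in auto)
  have "(\<Sum>j\<in>{1..n}. termG n w v s t (insert m P) p \<alpha> \<beta> (transpose m (q s) \<circ> q) (i(m := j)))
     = (\<Sum>j\<in>{1..n}. emb (K * (Vec n w \<alpha> j * Cp n (p m) j (i (q s)))) * aE (i s) (i t))"
  proof (rule sum.cong[OF refl])
    fix j
    show "termG n w v s t (insert m P) p \<alpha> \<beta> (transpose m (q s) \<circ> q) (i(m := j)) =
      emb (K * (Vec n w \<alpha> j * Cp n (p m) j (i (q s)))) * aE (i s) (i t)"
      unfolding term_eval'[OF cD] prodj K_def using st by (simp add: mult_ac)
  qed
  also have "\<dots> = emb (K * Vec n w (\<alpha> + p m) (i (q s))) * aE (i s) (i t)"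
    unfolding sum_emb sum_distrib_left[symmetric] Vec_step[OF iq[OF cD]] ..
  also have "\<dots> = - termG n w v s t P p (\<alpha> + p m) \<beta> q i"
    unfolding termG_def R_def K_def by (simp add: mult_ac emb_uminus)
  finally show ?thesis .
qed

lemma caseT:
  shows "(\<Sum>j\<in>{1..n}. termG n w v s t (insert m P) p \<alpha> \<beta> (transpose m (q t) \<circ> q) (i(m := j)))
    = - termG n w v s t P p \<alpha> (\<beta> + p m) q i"
proof -
  have cD: "t \<in> insert s (insert t P)" by simp
  define R where "R = (\<Prod>k\<in>P. Cp n (p k) (i k) (i (q k)))"
  define K where "K = - of_int (sign q) * R * Vec n w \<alpha> (i (q s))"
  have prodj: "(\<Prod>k\<in>P. Cp n (p k) (i k) (if k = t then j else i (q k))) = R" for j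
    unfolding R_def by (rule prod.cong) (use tP in auto)
  have "(\<Sum>j\<in>{1..n}. termG n w v s t (insert m P) p \<alpha> \<beta> (transpose m (q t) \<circ> q) (i(m := j)))
     = (\<Sum>j\<in>{1..n}. emb (K * (Vec n v \<beta> j * Cp n (p m) j (i (q t)))) * aE (i s) (i t))"
  proof (rule sum.cong[OF refl])
    fix j
    show "termG n w v s t (insert m P) p \<alpha> \<beta> (transpose m (q t) \<circ> q) (i(m := j)) =
      emb (K * (Vec n v \<beta> j * Cp n (p m) j (i (q t)))) * aE (i s) (i t)"
      unfolding term_eval'[OF cD] prodj K_def using st by (simp add: mult_ac)
  qed
  also have "\<dots> = emb (K * Vec n v (\<beta> + p m) (i (q t))) * aE (i s) (i t)"
    unfolding sum_emb sum_distrib_left[symmetric] Vec_step[OF iq[OF cD]] ..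
  also have "\<dots> = - termG n w v s t P p \<alpha> (\<beta> + p m) q i"
    unfolding termG_def R_def K_def by (simp add: mult_ac emb_uminus)
  finally show ?thesis .
qed

lemma caseM:
  assumes pm: "0 < p m"
  shows "(\<Sum>j\<in>{1..n}. termG n w v s t (insert m P) p \<alpha> \<beta> q (i(m := j))) = 0"
proof -
  have qm: "q m = m" by (rule permutes_not_in[OF q mD])
  have qD: "q k \<in> insert s (insert t P)" if "k \<in> insert s (insert t P)" for k
    using permutes_in_image[OF q] that by simp
  have qnm: "q k \<noteq> m" if "k \<in> insert s (insert t P)" for k using qD[OF that] mD by auto
  define K where "K = of_int (sign q) * (\<Prod>k\<in>P. Cp n (p k) (i k) (i (q k)))
     * Vec n w \<alpha> (i (q s)) * Vec n v \<beta> (i (q t))"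
  have "(\<Sum>j\<in>{1..n}. termG n w v s t (insert m P) p \<alpha> \<beta> q (i(m := j)))
     = (\<Sum>j\<in>{1..n}. emb (K * Cp n (p m) j j) * aE (i s) (i t))"
  proof (rule sum.cong[OF refl])
    fix j
    have pe: "(\<Prod>k\<in>P. Cp n (p k) ((i(m := j)) k) ((i(m := j)) (q k))) = (\<Prod>k\<in>P. Cp n (p k) (i k) (i (q k)))"
    proof (rule prod.cong[OF refl])
      fix k assume k: "k \<in> P"
      then have "k \<noteq> m" "q k \<noteq> m" using mP qnm[of k] by auto
      then show "Cp n (p k) ((i(m := j)) k) ((i(m := j)) (q k)) = Cp n (p k) (i k) (i (q k))" by simp
    qed
    have "q s \<noteq> m" "q t \<noteq> m" using qnm by auto
    then show "termG n w v s t (insert m P) p \<alpha> \<beta> q (i(m := j)) = emb (K * Cp n (p m) j j) * aE (i s) (i t)"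
      unfolding termG_def prod.insert[OF fP mP] pe K_def using qm ms mt by (simp add: mult_ac)
  qed
  also have "\<dots> = emb (K * (\<Sum>j\<in>{1..n}. Cp n (p m) j j)) * aE (i s) (i t)"
    unfolding sum_emb sum_distrib_left ..
  also have "\<dots> = 0" using trace_zero_Ev[OF pm] by (simp add: emb_0)
  finally show ?thesis .
qed

end

lemma F_split:
  assumes "m \<notin> D"
  shows "(\<Sum>i\<in>PiE (insert m D) (\<lambda>_. {1..n::nat}). f i) = (\<Sum>i\<in>PiE D (\<lambda>_. {1..n}). \<Sum>j\<in>{1..n}. f (i(m := j)))"
  unfolding sum_PiE_insert[OF assms] by (rule sum.swap)

lemma GG_rec:
  assumes fP: "finite P" and st: "s \<noteq> t" and sP: "s \<notin> P" and tP: "t \<notin> P" and mP: "m \<notin> P"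
    and ms: "m \<noteq> s" and mt: "m \<noteq> t" and pm: "0 < p m"
  shows "GG n w v s t (insert m P) p \<alpha> \<beta> =
    - (\<Sum>c\<in>P. GG n w v s t P (p(c := p c + p m)) \<alpha> \<beta>) - GG n w v s t P p (\<alpha> + p m) \<beta>
    - GG n w v s t P p \<alpha> (\<beta> + p m)"
proof -
  define D where "D = insert s (insert t P)"
  have fD: "finite D" unfolding D_def using fP by simp
  have mD: "m \<notin> D" unfolding D_def using mP ms mt by simp
  have eD: "insert s (insert t (insert m P)) = insert m D" unfolding D_def by auto
  define T where "T = termG n w v s t (insert m P) p \<alpha> \<beta>"
  define F where "F \<sigma> = (\<Sum>i\<in>PiE D (\<lambda>_. {1..n}). \<Sum>j\<in>{1..n}. T \<sigma> (i(m := j)))" for \<sigma>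
  have "GG n w v s t (insert m P) p \<alpha> \<beta> = (\<Sum>\<sigma>\<in>{\<sigma>. \<sigma> permutes insert m D}. F \<sigma>)"
    unfolding GG_def eD F_def T_def F_split[OF mD] ..
  also have "\<dots> = (\<Sum>b\<in>insert m D. \<Sum>q\<in>{q. q permutes D}. F (transpose m b \<circ> q))"
    by (rule sum_over_permutations_insert[OF fD mD])
  also have "\<dots> = (\<Sum>q\<in>{q. q permutes D}. F q) + (\<Sum>b\<in>D. \<Sum>q\<in>{q. q permutes D}. F (transpose m b \<circ> q))"
    by (subst sum.insert[OF fD mD]) simp
  also have "(\<Sum>q\<in>{q. q permutes D}. F q) = 0"
  proof (rule sum.neutral, rule ballI)
    fix q assume q: "q \<in> {q. q permutes D}"
    show "F q = 0" unfolding F_def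
    proof (rule sum.neutral, rule ballI)
      fix i assume i: "i \<in> PiE D (\<lambda>_. {1..n})"
      have qD: "q permutes insert s (insert t P)" using q D_def by simp
      have iD: "i \<in> PiE (insert s (insert t P)) (\<lambda>_. {1..n})" using i D_def by simp
      show "(\<Sum>j\<in>{1..n}. T q (i(m := j))) = 0"
        unfolding T_def by (rule caseM[where n=n and w=w and v=v and s=s and t=t and m=m and P=P and q=q and p=p and \<alpha>=\<alpha> and \<beta>=\<beta> and i=i, OF fP st sP tP mP ms mt qD iD pm])
    qed
  qed
  also have "(\<Sum>b\<in>D. \<Sum>q\<in>{q. q permutes D}. F (transpose m b \<circ> q))
      = (\<Sum>q\<in>{q. q permutes D}. \<Sum>c\<in>D. F (transpose m (q c) \<circ> q))"
  proof -
    have "(\<Sum>b\<in>D. \<Sum>q\<in>{q. q permutes D}. F (transpose m b \<circ> q))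
      = (\<Sum>q\<in>{q. q permutes D}. \<Sum>b\<in>D. F (transpose m b \<circ> q))" by (rule sum.swap)
    also have "\<dots> = (\<Sum>q\<in>{q. q permutes D}. \<Sum>c\<in>D. F (transpose m (q c) \<circ> q))"
    proof (rule sum.cong[OF refl])
      fix q assume "q \<in> {q. q permutes D}"
      then have "bij_betw q D D" using permutes_imp_bij by auto
      then show "(\<Sum>b\<in>D. F (transpose m b \<circ> q)) = (\<Sum>c\<in>D. F (transpose m (q c) \<circ> q))"
        using sum.reindex_bij_betw[of q D D "\<lambda>b. F (transpose m b \<circ> q)"] by simp
    qed
    finally show ?thesis .
  qed
  also have "\<dots> = (\<Sum>q\<in>{q. q permutes D}.
      - (\<Sum>i\<in>PiE D (\<lambda>_. {1..n}). termG n w v s t P p (\<alpha> + p m) \<beta> q i)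
      - (\<Sum>i\<in>PiE D (\<lambda>_. {1..n}). termG n w v s t P p \<alpha> (\<beta> + p m) q i)
      - (\<Sum>c\<in>P. \<Sum>i\<in>PiE D (\<lambda>_. {1..n}). termG n w v s t P (p(c := p c + p m)) \<alpha> \<beta> q i))"
  proof (rule sum.cong[OF refl])
    fix q assume q: "q \<in> {q. q permutes D}"
    have qD: "q permutes insert s (insert t P)" using q D_def by simp
    have sD: "s \<notin> insert t P" using st sP by simp
    have "(\<Sum>c\<in>D. F (transpose m (q c) \<circ> q)) = F (transpose m (q s) \<circ> q) + F (transpose m (q t) \<circ> q)
        + (\<Sum>c\<in>P. F (transpose m (q c) \<circ> q))"
    proof -
      have f1: "finite (insert t P)" using fP by simp
      show ?thesis unfolding D_def sum.insert[OF f1 sD] sum.insert[OF fP tP] by (simp only: add.assoc)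
    qed
    also have "F (transpose m (q s) \<circ> q) = - (\<Sum>i\<in>PiE D (\<lambda>_. {1..n}). termG n w v s t P p (\<alpha> + p m) \<beta> q i)"
      unfolding F_def T_def sum_negf[symmetric]
      by (rule sum.cong[OF refl], rule caseS[where n=n and w=w and v=v and s=s and t=t and m=m and P=P and q=q and p=p and \<alpha>=\<alpha> and \<beta>=\<beta>, OF fP st sP tP mP ms mt qD]) (simp add: D_def)
    also have "F (transpose m (q t) \<circ> q) = - (\<Sum>i\<in>PiE D (\<lambda>_. {1..n}). termG n w v s t P p \<alpha> (\<beta> + p m) q i)"
      unfolding F_def T_def sum_negf[symmetric]
      by (rule sum.cong[OF refl], rule caseT[where n=n and w=w and v=v and s=s and t=t and m=m and P=P and q=q and p=p and \<alpha>=\<alpha> and \<beta>=\<beta>, OF fP st sP tP mP ms mt qD]) (simp add: D_def)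
    also have "(\<Sum>c\<in>P. F (transpose m (q c) \<circ> q)) =
        - (\<Sum>c\<in>P. \<Sum>i\<in>PiE D (\<lambda>_. {1..n}). termG n w v s t P (p(c := p c + p m)) \<alpha> \<beta> q i)"
      unfolding sum_negf[symmetric]
    proof (rule sum.cong[OF refl])
      fix c assume c: "c \<in> P"
      show "F (transpose m (q c) \<circ> q) = (\<Sum>i\<in>PiE D (\<lambda>_. {1..n}). - termG n w v s t P (p(c := p c + p m)) \<alpha> \<beta> q i)"
        unfolding F_def T_def
        by (rule sum.cong[OF refl], rule caseP[where n=n and w=w and v=v and s=s and t=t and m=m and P=P and q=q and p=p and \<alpha>=\<alpha> and \<beta>=\<beta> and c=c, OF fP st sP tP mP ms mt qD _ c]) (simp add: D_def)
    qed
    finally show "(\<Sum>c\<in>D. F (transpose m (q c) \<circ> q)) =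
      - (\<Sum>i\<in>PiE D (\<lambda>_. {1..n}). termG n w v s t P p (\<alpha> + p m) \<beta> q i)
      - (\<Sum>i\<in>PiE D (\<lambda>_. {1..n}). termG n w v s t P p \<alpha> (\<beta> + p m) q i)
      - (\<Sum>c\<in>P. \<Sum>i\<in>PiE D (\<lambda>_. {1..n}). termG n w v s t P (p(c := p c + p m)) \<alpha> \<beta> q i)"
      by (simp only: diff_conv_add_uminus)
  qed
  also have "\<dots> = - GG n w v s t P p (\<alpha> + p m) \<beta> - GG n w v s t P p \<alpha> (\<beta> + p m)
      - (\<Sum>c\<in>P. GG n w v s t P (p(c := p c + p m)) \<alpha> \<beta>)"
    unfolding GG_def D_def[symmetric] sum_subtractf sum_negf
    by (subst sum.swap[of _ P]) simp
  finally show ?thesis by (simp only: diff_conv_add_uminus add_0 add_ac)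
qed

definition fE :: "nat \<Rightarrow> (nat \<Rightarrow> complex) \<Rightarrow> (nat \<Rightarrow> complex) \<Rightarrow> nat \<Rightarrow> E" where
  "fE n w v N = (\<Sum>k\<in>{1..n}. \<Sum>l\<in>{1..n}. cs (w k * v l) * MN n N k l)"

lemma emb_Vec: "emb (Vec n u a x) = (\<Sum>k\<in>{1..n}. cs (u k) * mpowG n (CM n) a k x)"
  unfolding Vec_def emb_sum emb_mult emb_cv emb_Cp ..

lemma psi_inner:
  assumes k: "k \<in> {1..n}" and l: "l \<in> {1..n}"
  shows "(\<Sum>x\<in>{1..n}. \<Sum>y\<in>{1..n}. mpowG n (CM n) a k x * aE x y * mpowG n (CM n) b l y) = MN n (a + b) k l"
proof -
  have "(\<Sum>x\<in>{1..n}. \<Sum>y\<in>{1..n}. mpowG n (CM n) a k x * aE x y * mpowG n (CM n) b l y)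
      = (\<Sum>y\<in>{1..n}. mmG n (mpowG n (CM n) a) aE k y * mpowG n (BAM n) b y l)"
    unfolding mmG_def sum_distrib_right
    by (subst sum.swap) (intro sum.cong refl, simp add: Cpow_trans[OF _ l])
  also have "\<dots> = mmG n (mmG n (mpowG n (CM n) a) aE) (mpowG n (BAM n) b) k l"
    by (simp add: mmG_def)
  also have "\<dots> = mmG n (mmG n aE (mpowG n (BAM n) a)) (mpowG n (BAM n) b) k l"
    by (rule mm_cong_gen) (use CA[of n a] k in \<open>auto simp: meq_def\<close>)
  also have "\<dots> = mmG n aE (mmG n (mpowG n (BAM n) a) (mpowG n (BAM n) b)) k l"
    by (simp add: mm_assoc)
  also have "\<dots> = MN n (a + b) k l"
    unfolding MN_def by (rule mm_cong_gen) (use mpow_add[OF l] in auto)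
  finally show ?thesis .
qed

lemma sum4_swap: "(\<Sum>x\<in>A. \<Sum>y\<in>B. \<Sum>k\<in>C. \<Sum>l\<in>D. F x y k l) = (\<Sum>k\<in>C. \<Sum>l\<in>D. \<Sum>x\<in>A. \<Sum>y\<in>B. F x y k l)"
proof -
  have "(\<Sum>x\<in>A. \<Sum>y\<in>B. \<Sum>k\<in>C. \<Sum>l\<in>D. F x y k l) = (\<Sum>x\<in>A. \<Sum>k\<in>C. \<Sum>y\<in>B. \<Sum>l\<in>D. F x y k l)"
    by (rule sum.cong[OF refl], rule sum.swap)
  also have "\<dots> = (\<Sum>k\<in>C. \<Sum>x\<in>A. \<Sum>y\<in>B. \<Sum>l\<in>D. F x y k l)" by (rule sum.swap)
  also have "\<dots> = (\<Sum>k\<in>C. \<Sum>x\<in>A. \<Sum>l\<in>D. \<Sum>y\<in>B. F x y k l)"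
    by (rule sum.cong[OF refl], rule sum.cong[OF refl], rule sum.swap)
  also have "\<dots> = (\<Sum>k\<in>C. \<Sum>l\<in>D. \<Sum>x\<in>A. \<Sum>y\<in>B. F x y k l)"
    by (rule sum.cong[OF refl], rule sum.swap)
  finally show ?thesis .
qed

lemma psi:
  "(\<Sum>x\<in>{1..n}. \<Sum>y\<in>{1..n}. emb (Vec n u a x * Vec n u' b y) * aE x y)
    = (\<Sum>k\<in>{1..n}. \<Sum>l\<in>{1..n}. cs (u k * u' l) * MN n (a + b) k l)"
proof -
  have e1: "emb (Vec n u a x * Vec n u' b y) * aE x y =
      (\<Sum>k\<in>{1..n}. \<Sum>l\<in>{1..n}. cs (u k * u' l) * (mpowG n (CM n) a k x * aE x y * mpowG n (CM n) b l y))"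
    for x y
  proof -
    have "emb (Vec n u a x * Vec n u' b y) * aE x y =
      (\<Sum>k\<in>{1..n}. \<Sum>l\<in>{1..n}. cs (u k) * mpowG n (CM n) a k x * (cs (u' l) * mpowG n (CM n) b l y) * aE x y)"
      unfolding emb_mult emb_Vec by (simp only: sum_distrib_left sum_distrib_right) (rule sum.swap)
    also have "\<dots> = (\<Sum>k\<in>{1..n}. \<Sum>l\<in>{1..n}. cs (u k * u' l) * (mpowG n (CM n) a k x * aE x y * mpowG n (CM n) b l y))"
    proof (intro sum.cong refl)
      fix k l
      have c1: "mpowG n (CM n) a k x * cs (u' l) = cs (u' l) * mpowG n (CM n) a k x"
        by (rule cs_commute[symmetric])
      have c2: "mpowG n (CM n) b l y * aE x y = aE x y * mpowG n (CM n) b l y"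
        by (rule evE_commute) (rule evE_mpow, rule evE_CM)
      have "cs (u k) * mpowG n (CM n) a k x * (cs (u' l) * mpowG n (CM n) b l y) * aE x y =
          cs (u k) * ((mpowG n (CM n) a k x * cs (u' l)) * (mpowG n (CM n) b l y * aE x y))"
        by (simp only: mult.assoc)
      also have "\<dots> = cs (u k) * ((cs (u' l) * mpowG n (CM n) a k x) * (aE x y * mpowG n (CM n) b l y))"
        by (simp only: c1 c2)
      also have "\<dots> = (cs (u k) * cs (u' l)) * (mpowG n (CM n) a k x * aE x y * mpowG n (CM n) b l y)"
        by (simp only: mult.assoc)
      finally show "cs (u k) * mpowG n (CM n) a k x * (cs (u' l) * mpowG n (CM n) b l y) * aE x y =
        cs (u k * u' l) * (mpowG n (CM n) a k x * aE x y * mpowG n (CM n) b l y)"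
        unfolding cs_mult .
    qed
    finally show ?thesis .
  qed
  have "(\<Sum>x\<in>{1..n}. \<Sum>y\<in>{1..n}. emb (Vec n u a x * Vec n u' b y) * aE x y)
    = (\<Sum>k\<in>{1..n}. \<Sum>l\<in>{1..n}. cs (u k * u' l) *
        (\<Sum>x\<in>{1..n}. \<Sum>y\<in>{1..n}. mpowG n (CM n) a k x * aE x y * mpowG n (CM n) b l y))"
    unfolding e1 sum_distrib_left by (rule sum4_swap)
  also have "\<dots> = (\<Sum>k\<in>{1..n}. \<Sum>l\<in>{1..n}. cs (u k * u' l) * MN n (a + b) k l)"
  proof (intro sum.cong refl)
    fix k l assume k: "k \<in> {1..n}" and l: "l \<in> {1..n}"
    show "cs (u k * u' l) * (\<Sum>x\<in>{1..n}. \<Sum>y\<in>{1..n}. mpowG n (CM n) a k x * aE x y * mpowG n (CM n) b l y)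
       = cs (u k * u' l) * MN n (a + b) k l" by (simp only: psi_inner[OF k l])
  qed
  finally show ?thesis .
qed

lemma GG_base:
  assumes st: "s \<noteq> t"
  shows "GG n w v s t {} p \<alpha> \<beta> = fE n w v (\<alpha> + \<beta>) + fE n w v (\<alpha> + \<beta>)"
proof -
  define h where "h \<sigma> = (\<Sum>i\<in>PiE {s, t} (\<lambda>_. {1..n}). termG n w v s t {} p \<alpha> \<beta> \<sigma> i)" for \<sigma>
  have ts: "t \<notin> {}" by simp
  have sT: "s \<notin> {t}" using st by simp
  have "GG n w v s t {} p \<alpha> \<beta> = (\<Sum>\<sigma>\<in>{\<sigma>. \<sigma> permutes insert s {t}}. h \<sigma>)"
    unfolding GG_def h_def by simp
  also have "\<dots> = (\<Sum>b\<in>insert s {t}. \<Sum>q\<in>{q. q permutes {t}}. h (transpose s b \<circ> q))"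
    by (rule sum_over_permutations_insert) (use st in auto)
  also have "\<dots> = h id + h (transpose s t)"
    using st by simp
  finally have e0: "GG n w v s t {} p \<alpha> \<beta> = h id + h (transpose s t)" .
  define I where "I x y = ((\<lambda>_. undefined)(t := y))(s := x)" for x y :: nat
  have Is: "I x y s = x" and It: "I x y t = y" for x y using st by (auto simp: I_def)
  have hsum: "h \<sigma> = (\<Sum>x\<in>{1..n}. \<Sum>y\<in>{1..n}. termG n w v s t {} p \<alpha> \<beta> \<sigma> (I x y))" for \<sigma>
  proof -
    have "h \<sigma> = (\<Sum>x\<in>{1..n}. \<Sum>i\<in>PiE {t} (\<lambda>_. {1..n}). termG n w v s t {} p \<alpha> \<beta> \<sigma> (i(s := x)))"
      unfolding h_def using sum_PiE_insert[OF sT] by simp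
    also have "\<dots> = (\<Sum>x\<in>{1..n}. \<Sum>y\<in>{1..n}. \<Sum>i\<in>PiE {} (\<lambda>_. {1..n}). termG n w v s t {} p \<alpha> \<beta> \<sigma> ((i(t := y))(s := x)))"
      by (rule sum.cong[OF refl]) (rule sum_PiE_insert[OF ts])
    also have "\<dots> = (\<Sum>x\<in>{1..n}. \<Sum>y\<in>{1..n}. termG n w v s t {} p \<alpha> \<beta> \<sigma> (I x y))"
      by (simp add: I_def fun_upd_def)
    finally show ?thesis .
  qed
  have sgt: "sign (transpose s t) = -1" using st by (simp add: sign_swap_id)
  have h1: "h id = (\<Sum>x\<in>{1..n}. \<Sum>y\<in>{1..n}. emb (Vec n w \<alpha> x * Vec n v \<beta> y) * aE x y)"
    unfolding hsum termG_def by (simp add: Is It emb_1)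
  have h2: "h (transpose s t) = - (\<Sum>x\<in>{1..n}. \<Sum>y\<in>{1..n}. emb (Vec n v \<beta> x * Vec n w \<alpha> y) * aE x y)"
    unfolding hsum termG_def sgt using st
    by (simp add: Is It emb_uminus emb_1 sum_negf mult.commute[of "Vec n w \<alpha> _"])
  have f2: "(\<Sum>k\<in>{1..n}. \<Sum>l\<in>{1..n}. cs (v k * w l) * MN n (\<beta> + \<alpha>) k l) = - fE n w v (\<alpha> + \<beta>)"
  proof -
    have "(\<Sum>k\<in>{1..n}. \<Sum>l\<in>{1..n}. cs (v k * w l) * MN n (\<beta> + \<alpha>) k l)
        = (\<Sum>l\<in>{1..n}. \<Sum>k\<in>{1..n}. cs (v k * w l) * MN n (\<beta> + \<alpha>) k l)" by (rule sum.swap)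
    also have "\<dots> = (\<Sum>l\<in>{1..n}. \<Sum>k\<in>{1..n}. - (cs (w l * v k) * MN n (\<alpha> + \<beta>) l k))"
    proof (intro sum.cong refl)
      fix l k assume l: "l \<in> {1..n}" and k: "k \<in> {1..n}"
      show "cs (v k * w l) * MN n (\<beta> + \<alpha>) k l = - (cs (w l * v k) * MN n (\<alpha> + \<beta>) l k)"
        using MN_anti[OF l k, of "\<alpha> + \<beta>"] by (simp add: add.commute mult.commute)
    qed
    also have "\<dots> = - fE n w v (\<alpha> + \<beta>)" unfolding fE_def by (simp add: sum_negf)
    finally show ?thesis .
  qed
  show ?thesis unfolding e0 h1 h2 psi f2 fE_def by simp
qed

lemma sum_upd_plus:
  assumes "finite P" "c \<in> P"
  shows "sum (p(c := p c + x)) P = sum p P + (x::nat)"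
proof -
  have "sum (p(c := p c + x)) P = (p(c := p c + x)) c + sum (p(c := p c + x)) (P - {c})"
    by (rule sum.remove[OF assms])
  also have "sum (p(c := p c + x)) (P - {c}) = sum p (P - {c})" by (rule sum.cong) auto
  also have "sum p P = p c + sum p (P - {c})" by (rule sum.remove[OF assms])
  ultimately show ?thesis by simp
qed

lemma coeff_int: "(-1::int) ^ Suc c * fact (Suc c + 1) * 2 = - (int c * ((-1) ^ c * fact (c + 1) * 2))
    - (-1) ^ c * fact (c + 1) * 2 - (-1) ^ c * fact (c + 1) * 2"
proof -
  have "fact (Suc c + 1) = (int c + 2) * (fact (c + 1) :: int)"
    by (simp add: fact_Suc algebra_simps)
  then show ?thesis by (simp add: algebra_simps)
qed

lemma GG_formula:
  assumes "finite P"
  shows "s \<noteq> t \<Longrightarrow> s \<notin> P \<Longrightarrow> t \<notin> P \<Longrightarrow> (\<forall>k\<in>P. 0 < p k) \<Longrightarrow>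
    GG n w v s t P p \<alpha> \<beta> = of_int ((-1) ^ card P * fact (card P + 1) * 2) * fE n w v (\<alpha> + \<beta> + sum p P)"
  using assms
proof (induction P arbitrary: p \<alpha> \<beta> rule: finite_induct)
  case empty
  then show ?case using GG_base[of s t n w v p \<alpha> \<beta>] by (simp add: mult_2)
next
  case (insert m P)
  note fP = insert.hyps(1) and mP = insert.hyps(2)
  have st: "s \<noteq> t" and sP: "s \<notin> P" and tP: "t \<notin> P" and ms: "m \<noteq> s" and mt: "m \<noteq> t"
    using insert.prems by auto
  have pos: "\<forall>k\<in>P. 0 < p k" and pm: "0 < p m" using insert.prems by auto
  define Kz :: int where "Kz = (-1) ^ card P * fact (card P + 1) * 2"
  define N where "N = \<alpha> + \<beta> + sum p P + p m"
  define F where "F = fE n w v N"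
  have IH: "GG n w v s t P p' \<alpha>' \<beta>' = of_int Kz * fE n w v (\<alpha>' + \<beta>' + sum p' P)"
    if "\<forall>k\<in>P. 0 < p' k" for p' \<alpha>' \<beta>'
    unfolding Kz_def by (rule insert.IH[OF st sP tP that])
  have g1: "GG n w v s t P (p(c := p c + p m)) \<alpha> \<beta> = of_int Kz * F" if c: "c \<in> P" for c
  proof -
    have "\<forall>k\<in>P. 0 < (p(c := p c + p m)) k" using pos by auto
    then have "GG n w v s t P (p(c := p c + p m)) \<alpha> \<beta> = of_int Kz * fE n w v (\<alpha> + \<beta> + sum (p(c := p c + p m)) P)"
      by (rule IH)
    then show ?thesis unfolding F_def N_def sum_upd_plus[OF fP c] by (simp add: add.assoc)
  qed
  have g2: "GG n w v s t P p (\<alpha> + p m) \<beta> = of_int Kz * F"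
    unfolding IH[OF pos] F_def N_def by (simp add: algebra_simps)
  have g3: "GG n w v s t P p \<alpha> (\<beta> + p m) = of_int Kz * F"
    unfolding IH[OF pos] F_def N_def by (simp add: algebra_simps)
  have "GG n w v s t (insert m P) p \<alpha> \<beta> = - (\<Sum>c\<in>P. of_int Kz * F) - of_int Kz * F - of_int Kz * F"
    unfolding GG_rec[where p=p and m=m and n=n and w=w and v=v and \<alpha>=\<alpha> and \<beta>=\<beta>, OF fP st sP tP mP ms mt pm] g2 g3 using g1 by simp
  also have "(\<Sum>c\<in>P. of_int Kz * F) = of_int (int (card P) * Kz) * F"
    by (simp add: of_int_mult mult.assoc)
  also have "- (of_int (int (card P) * Kz) * F) - of_int Kz * F - of_int Kz * F = of_int (- (int (card P) * Kz) - Kz - Kz) * F"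
    by (simp only: of_int_diff of_int_minus left_diff_distrib mult_minus_left)
  also have "- (int (card P) * Kz) - Kz - Kz = (-1) ^ card (insert m P) * fact (card (insert m P) + 1) * 2"
    unfolding Kz_def card_insert_disjoint[OF fP mP] by (rule coeff_int[symmetric])
  also have "F = fE n w v (\<alpha> + \<beta> + sum p (insert m P))"
    unfolding F_def N_def sum.insert[OF fP mP] by (simp add: algebra_simps)
  finally show ?case .
qed

lemma fE_zero:
  assumes n: "n \<ge> 1"
  shows "fE n w v (n - 1) = 0"
proof -
  define P where "P = {1..n - 1}"
  have fP: "finite P" unfolding P_def by simp
  have sP: "n \<notin> P" and tP: "n + 1 \<notin> P" unfolding P_def using n by auto
  have st: "n \<noteq> n + 1" by simp
  have cP: "card P = n - 1" unfolding P_def by simp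
  have big: "n < card (insert n (insert (n + 1) P))" using sP tP fP cP n by simp
  define Kz :: int where "Kz = (-1) ^ card P * fact (card P + 1) * 2"
  have Kz0: "Kz \<noteq> 0" unfolding Kz_def by simp
  have "GG n w v n (n + 1) P (\<lambda>_. 1) 0 0 = of_int Kz * fE n w v (0 + 0 + sum (\<lambda>_. 1) P)"
    unfolding Kz_def by (rule GG_formula[OF fP st sP tP]) simp
  moreover have "GG n w v n (n + 1) P (\<lambda>_. 1) 0 0 = 0" by (rule GG_big_zero[OF fP big])
  ultimately have h: "of_int Kz * fE n w v (n - 1) = 0" using cP by simp
  have "fE n w v (n - 1) = cs (1 / of_int Kz) * (of_int Kz * fE n w v (n - 1))"
  proof -
    have "cs (1 / of_int Kz) * of_int Kz = (1::E)"
      using Kz0 by (simp flip: cs_of_int cs_mult add: cs_one)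
    then show ?thesis by (simp flip: mult.assoc)
  qed
  then show ?thesis using h by simp
qed

lemma gen_a_rep: "gen_a = (\<lambda>i j. rep (aE i j))" by (simp add: rep_aE)
lemma gen_b_rep: "gen_b = (\<lambda>i j. rep (bE i j))" by (simp add: rep_bE)

lemma mat_mul_rep: "mat_mul n (\<lambda>i j. rep (X i j)) (\<lambda>i j. rep (Y i j)) = (\<lambda>i j. rep (mmG n X Y i j))"
  unfolding mat_mul_def mmG_def by (simp add: rep_sum rep_times)

lemma mat_pow_rep: "mat_pow n (\<lambda>i j. rep (X i j)) k = (\<lambda>i j. rep (mpowG n X k i j))"
proof (induction k)
  case 0 then show ?case by (intro ext) (simp add: mat_id_def midG_def rep_one rep_zero)
next
  case (Suc k) then show ?case by (simp add: mat_mul_rep)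
qed

lemma prod_list_rep: "ext_prod_list (map (\<lambda>k. rep (g k)) xs) = rep (prod_list (map g xs))"
proof (induction xs)
  case Nil then show ?case by (simp add: ext_prod_list_def rep_one)
next
  case (Cons x xs) then show ?case by (simp add: ext_prod_list_def rep_times)
qed

lemma scale_rep: "ext_scale c (rep X) = rep (cs c * X)" by (simp add: rep_cs_mul)

lemma bil_rep: "bil n w (\<lambda>i j. rep (M i j)) v = rep (\<Sum>(i, j)\<in>{1..n} \<times> {1..n}. cs (w i * v j) * M i j)"
  unfolding bil_def by (simp add: rep_sum scale_rep case_prod_unfold)

theorem proposition5p6:
  fixes n :: nat and v w :: "nat \<Rightarrow> complex"
  assumes "n \<ge> 1"
  shows "Qsum n v w =
    ext_scale ((-1) ^ (n - 1) * 2 * of_nat (fact (n - 1)))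
      (bil n w (mat_mul n gen_a (mat_pow n (mat_mul n gen_b gen_a) (n - 1))) v)"
proof -
  have r1: "mat_mul n gen_a (mat_pow n (mat_mul n gen_b gen_a) (n - 1)) = (\<lambda>i j. rep (MN n (n - 1) i j))"
    unfolding gen_a_rep gen_b_rep mat_mul_rep mat_pow_rep MN_def BAM_def ..
  have "(\<Sum>(i, j)\<in>{1..n} \<times> {1..n}. cs (w i * v j) * MN n (n - 1) i j) = fE n w v (n - 1)"
    unfolding fE_def by (simp add: sum.cartesian_product)
  then have rhs: "ext_scale ((-1) ^ (n - 1) * 2 * of_nat (fact (n - 1)))
      (bil n w (mat_mul n gen_a (mat_pow n (mat_mul n gen_b gen_a) (n - 1))) v) = rep 0"
    unfolding r1 bil_rep fE_zero[OF assms] scale_rep by simp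
  define H where "H i j = cs (w (j n) * v (j (n + 1))) *
     (prod_list (map (\<lambda>k. CM n (i k) (j k)) [1..<n]) * aE (i n) (i (n + 1)))" for i j :: "nat \<Rightarrow> nat"
  have cm: "mat_mul n gen_a gen_b = (\<lambda>i j. rep (CM n i j))"
    unfolding gen_a_rep gen_b_rep mat_mul_rep CM_def ..
  have "Qsum n v w = rep (\<Sum>\<sigma>\<in>{\<sigma>. \<sigma> permutes {1..n+1}}. \<Sum>ii\<in>PiE {1..n+1} (\<lambda>_. {1..n}).
        of_int (sign \<sigma>) * H ii (ii \<circ> \<sigma>))"
  proof -
    have fp: "finite {\<sigma>. \<sigma> permutes {1..n+1}}" by (rule finite_permutations) simp
    have fi: "finite (PiE {1..n+1} (\<lambda>_. {1..n}))" by (rule finite_PiE) simp_all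
    have e: "ext_scale (of_int (sign \<sigma>) * w (ii (\<sigma> n)) * v (ii (\<sigma> (n + 1))))
          (ext_prod_list (map (\<lambda>k. rep (CM n (ii k) (ii (\<sigma> k)))) [1..<n]) \<odot> rep (aE (ii n) (ii (n + 1))))
        = rep (of_int (sign \<sigma>) * H ii (ii \<circ> \<sigma>))" for \<sigma> ii
    proof -
      have "cs (of_int (sign \<sigma>) * w (ii (\<sigma> n)) * v (ii (\<sigma> (n + 1)))) = of_int (sign \<sigma>) * cs (w (ii (\<sigma> n)) * v (ii (\<sigma> (n + 1))))"
        by (simp add: cs_mult cs_of_int mult.assoc)
      then show ?thesis
        unfolding prod_list_rep rep_times[symmetric] scale_rep H_def by (simp add: mult.assoc)
    qed
    show ?thesis
      unfolding Qsum_def cm unfolding gen_a_rep e rep_sum[OF fp] rep_sum[OF fi] ..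
  qed
  also have "(\<Sum>\<sigma>\<in>{\<sigma>. \<sigma> permutes {1..n+1}}. \<Sum>ii\<in>PiE {1..n+1} (\<lambda>_. {1..n}).
        of_int (sign \<sigma>) * H ii (ii \<circ> \<sigma>)) = 0"
    by (rule alt_zero) simp_all
  finally show ?thesis using rhs by simp
qed

end
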